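(* Let $I$ be an open interval containing $[0,1]$ and let $f:I\to\mathbb{R}$ be twice differentiable on $I$ with bounded second derivative, and suppose $f>2$. Fix $\varepsilon\in\mathbb{R}$ and, for each positive integer $n$ large enough that the points below lie in $I$, let $T_n(f;\varepsilon)$ be the $n\times n$ tridiagonal matrix with diagonal entries \[ f\left(\tfrac{\varepsilon}{n}\right),\ f\left(\tfrac{1+\varepsilon}{n}\right),\ f\left(\tfrac{2+\varepsilon}{n}\right),\ \dots,\ f\left(\tfrac{n-1+\varepsilon}{n}\right) \] (i.e. the $(j,j)$ entry is $f\left(\frac{j-1+\varepsilon}{n}\right)$ for $j=1,\dots,n$), all super- and sub-diagonal entries equal to $-1$, and all other entries $0$. Let \[ G(f)=\exp\left\{\int_0^1 \log\left(\frac{f(x)+\sqrt{f^2(x)-4}}{2}\right)dx\right\}. \] Then \[ \lim_{n\to\infty}\frac{\det T_n(f;\varepsilon)}{G(f)^n}=\frac{\left(f(0)+\sqrt{f^2(0)-4}\right)^{1-\varepsilon}\left(f(1)+\sqrt{f^2(1)-4}\right)^{\varepsilon}}{2\sqrt[4]{(f^2(0)-4)(f^2(1)-4)}}. \] *)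

theory Defs
  imports "HOL-Analysis.Analysis" "Jordan_Normal_Form.Determinant"
begin

definition tridiag_T :: "(real \<Rightarrow> real) \<Rightarrow> real \<Rightarrow> nat \<Rightarrow> real Matrix.mat" where
  "tridiag_T f eps n = Matrix.mat n n (\<lambda>(i, j).
      if i = j then f ((real i + eps) / real n)
      else if i = j + 1 \<or> j = i + 1 then -1 else 0)"

definition G_f :: "(real \<Rightarrow> real) \<Rightarrow> real" where
  "G_f f = exp (integral {0..1} (\<lambda>x. ln ((f x + sqrt ((f x)\<^sup>2 - 4)) / 2)))"

end

theory Submission
  imports Defs
begin

definition TM :: "(nat \<Rightarrow> real) \<Rightarrow> nat \<Rightarrow> real Matrix.mat" where
  "TM d m = Matrix.mat m m (\<lambda>(i, j).
      if i = j then d i else if i = j + 1 \<or> j = i + 1 then -1 else 0)"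

fun Dr :: "(nat \<Rightarrow> real) \<Rightarrow> nat \<Rightarrow> real" where
  "Dr d 0 = 1"
| "Dr d (Suc 0) = d 0"
| "Dr d (Suc (Suc m)) = d (Suc m) * Dr d (Suc m) - Dr d m"

lemma TM_carrier[simp]: "TM d m \<in> carrier_mat m m" unfolding TM_def by auto

lemma det_TM: "Determinant.det (TM d m) = Dr d m"
proof (induction d m rule: Dr.induct)
  case (1 d) thus ?case using det_dim_zero[of "TM d 0"] by simp
next
  case (2 d)
  have "Determinant.det (TM d 1) = (\<Sum>j<1. TM d 1 $$ (0,j) * cofactor (TM d 1) 0 j)"
    by (rule laplace_expansion_row) auto
  also have "\<dots> = d 0" using det_dim_zero[of "mat_delete (TM d 1) 0 0"]
    by (simp add: cofactor_def TM_def mat_delete_def)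
  finally show ?case by simp
next
  case (3 d m)
  let ?A = "TM d (Suc (Suc m))"
  have del1: "mat_delete ?A (Suc m) (Suc m) = TM d (Suc m)"
    by (rule eq_matI) (auto simp: TM_def mat_delete_def)
  let ?B = "mat_delete ?A (Suc m) m"
  have Bc: "?B \<in> carrier_mat (Suc m) (Suc m)" by (auto simp: mat_delete_def TM_def)
  have del2: "mat_delete ?B m m = TM d m"
    by (rule eq_matI) (auto simp: TM_def mat_delete_def)
  have "Determinant.det ?B = (\<Sum>i<Suc m. ?B $$ (i, m) * cofactor ?B i m)"
    by (rule laplace_expansion_column[OF Bc]) simp
  also have "\<dots> = ?B $$ (m, m) * cofactor ?B m m"
    by (subst sum.remove[of _ m]) (auto simp: mat_delete_def TM_def intro!: sum.neutral)
  also have "\<dots> = - Dr d m" using "3.IH"(2) del2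
    by (simp add: cofactor_def mat_delete_def TM_def)
  finally have dB: "Determinant.det ?B = - Dr d m" .
  have "Determinant.det ?A = (\<Sum>j<Suc (Suc m). ?A $$ (Suc m, j) * cofactor ?A (Suc m) j)"
    by (rule laplace_expansion_row) auto
  also have "\<dots> = ?A $$ (Suc m, Suc m) * cofactor ?A (Suc m) (Suc m) + ?A $$ (Suc m, m) * cofactor ?A (Suc m) m"
    by (simp add: TM_def)
  also have "\<dots> = d (Suc m) * Dr d (Suc m) - Dr d m"
    using "3.IH"(1) del1 dB by (simp add: cofactor_def TM_def)
  finally show ?case by simp
qed

lemma tridiag_T_TM: "tridiag_T f eps n = TM (\<lambda>i. f ((real i + eps) / real n)) n"
  unfolding tridiag_T_def TM_def by simp

lemma cont_bound:
  assumes "compact K" "continuous_on K F"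
  shows "\<exists>M. \<forall>x\<in>K. \<bar>F x\<bar> \<le> (M::real)"
proof -
  have "bounded (F ` K)" using assms compact_continuous_image compact_imp_bounded by blast
  then obtain M where "\<forall>y\<in>F ` K. norm y \<le> M" by (auto simp: bounded_iff)
  thus ?thesis by auto
qed

lemma cont_pos_min:
  assumes "compact K" "K \<noteq> {}" "continuous_on K F" "\<And>x. x \<in> K \<Longrightarrow> (F x::real) > 0"
  shows "\<exists>c>0. \<forall>x\<in>K. c \<le> F x"
proof -
  have "compact (F ` K)" using assms compact_continuous_image by blast
  then obtain y where "y \<in> F ` K" "\<forall>t\<in>F ` K. y \<le> t"
    using compact_attains_inf[of "F ` K"] assms(2) by blast
  thus ?thesis using assms(4) by auto
qed

definition lipb :: "real set \<Rightarrow> (real \<Rightarrow> real) \<Rightarrow> bool" where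
  "lipb K F \<longleftrightarrow> (\<exists>M. \<forall>x\<in>K. \<bar>F x\<bar> \<le> M) \<and> (\<exists>L. \<forall>x\<in>K. \<forall>y\<in>K. \<bar>F x - F y\<bar> \<le> L * \<bar>x - y\<bar>)"

lemma lipbE:
  assumes "lipb K F"
  obtains M L where "\<forall>x\<in>K. \<bar>F x\<bar> \<le> M" "\<forall>x\<in>K. \<forall>y\<in>K. \<bar>F x - F y\<bar> \<le> L * \<bar>x - y\<bar>"
  using assms unfolding lipb_def by blast

lemma lipb_const: "lipb K (\<lambda>x. c)"
  unfolding lipb_def by (intro conjI exI[of _ "\<bar>c\<bar>"] exI[of _ 0]) auto

lemma lipb_add:
  assumes "lipb K F" "lipb K G" shows "lipb K (\<lambda>x. F x + G x)"
proof -
  obtain M1 L1 where 1: "\<forall>x\<in>K. \<bar>F x\<bar> \<le> M1" "\<forall>x\<in>K. \<forall>y\<in>K. \<bar>F x - F y\<bar> \<le> L1 * \<bar>x - y\<bar>"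
    using assms(1) by (rule lipbE)
  obtain M2 L2 where 2: "\<forall>x\<in>K. \<bar>G x\<bar> \<le> M2" "\<forall>x\<in>K. \<forall>y\<in>K. \<bar>G x - G y\<bar> \<le> L2 * \<bar>x - y\<bar>"
    using assms(2) by (rule lipbE)
  show ?thesis unfolding lipb_def
  proof (intro conjI exI ballI)
    fix x assume "x \<in> K" thus "\<bar>F x + G x\<bar> \<le> M1 + M2" using 1 2
      by (meson abs_triangle_ineq add_mono order_trans)
  next
    fix x y assume "x \<in> K" "y \<in> K"
    have "\<bar>F x + G x - (F y + G y)\<bar> \<le> \<bar>F x - F y\<bar> + \<bar>G x - G y\<bar>" by linarith
    also have "\<dots> \<le> L1 * \<bar>x - y\<bar> + L2 * \<bar>x - y\<bar>" using 1 2 \<open>x \<in> K\<close> \<open>y \<in> K\<close> by (intro add_mono) auto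
    finally show "\<bar>F x + G x - (F y + G y)\<bar> \<le> (L1 + L2) * \<bar>x - y\<bar>" by (simp add: distrib_right)
  qed
qed

lemma lipb_minus:
  assumes "lipb K F" shows "lipb K (\<lambda>x. - F x)"
proof -
  obtain M1 L1 where 1: "\<forall>x\<in>K. \<bar>F x\<bar> \<le> M1" "\<forall>x\<in>K. \<forall>y\<in>K. \<bar>F x - F y\<bar> \<le> L1 * \<bar>x - y\<bar>"
    using assms(1) by (rule lipbE)
  show ?thesis unfolding lipb_def
  proof (intro conjI exI ballI)
    fix x assume "x \<in> K" thus "\<bar>- F x\<bar> \<le> M1" using 1 by simp
  next
    fix x y assume "x \<in> K" "y \<in> K"
    thus "\<bar>- F x - - F y\<bar> \<le> L1 * \<bar>x - y\<bar>" using 1 by (simp add: abs_minus_commute)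
  qed
qed

lemma lipb_mult:
  assumes "lipb K F" "lipb K G" shows "lipb K (\<lambda>x. F x * G x)"
proof -
  obtain M1 L1 where 1: "\<forall>x\<in>K. \<bar>F x\<bar> \<le> M1" "\<forall>x\<in>K. \<forall>y\<in>K. \<bar>F x - F y\<bar> \<le> L1 * \<bar>x - y\<bar>"
    using assms(1) by (rule lipbE)
  obtain M2 L2 where 2: "\<forall>x\<in>K. \<bar>G x\<bar> \<le> M2" "\<forall>x\<in>K. \<forall>y\<in>K. \<bar>G x - G y\<bar> \<le> L2 * \<bar>x - y\<bar>"
    using assms(2) by (rule lipbE)
  show ?thesis unfolding lipb_def
  proof (intro conjI exI ballI)
    fix x assume "x \<in> K" thus "\<bar>F x * G x\<bar> \<le> M1 * M2" using 1 2
      by (simp add: abs_mult mult_mono')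
  next
    fix x y assume xy: "x \<in> K" "y \<in> K"
    have "\<bar>F x * G x - F y * G y\<bar> = \<bar>F x * (G x - G y) + G y * (F x - F y)\<bar>"
      by (simp add: algebra_simps)
    also have "\<dots> \<le> \<bar>F x\<bar> * \<bar>G x - G y\<bar> + \<bar>G y\<bar> * \<bar>F x - F y\<bar>"
      by (metis abs_mult abs_triangle_ineq)
    also have "\<dots> \<le> M1 * (L2 * \<bar>x - y\<bar>) + M2 * (L1 * \<bar>x - y\<bar>)"
      using xy 1 2 by (intro add_mono mult_mono) auto
    finally show "\<bar>F x * G x - F y * G y\<bar> \<le> (M1 * L2 + M2 * L1) * \<bar>x - y\<bar>"
      by (simp add: algebra_simps)
  qed
qed

lemma lipb_inverse:
  assumes "lipb K F" "c > 0" "\<And>x. x \<in> K \<Longrightarrow> c \<le> \<bar>F x\<bar>" shows "lipb K (\<lambda>x. 1 / F x)"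
proof -
  obtain M1 L1 where 1: "\<forall>x\<in>K. \<bar>F x\<bar> \<le> M1" "\<forall>x\<in>K. \<forall>y\<in>K. \<bar>F x - F y\<bar> \<le> L1 * \<bar>x - y\<bar>"
    using assms(1) by (rule lipbE)
  show ?thesis unfolding lipb_def
  proof (intro conjI exI ballI)
    fix x assume "x \<in> K" thus "\<bar>1 / F x\<bar> \<le> 1 / c" using assms(2,3)
      by (simp add: frac_le)
  next
    fix x y assume xy: "x \<in> K" "y \<in> K"
    have nz: "F x \<noteq> 0" "F y \<noteq> 0" using assms(2,3) xy by force+
    have "0 \<le> L1 * \<bar>x - y\<bar>" using 1 xy by (meson abs_ge_zero order_trans)
    have "\<bar>1 / F x - 1 / F y\<bar> = \<bar>F y - F x\<bar> / (\<bar>F x\<bar> * \<bar>F y\<bar>)"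
      using nz by (simp add: field_simps abs_mult)
    also have "\<dots> \<le> (L1 * \<bar>x - y\<bar>) / (c * c)"
      using xy 1 assms(2,3) \<open>0 \<le> L1 * \<bar>x - y\<bar>\<close> by (intro frac_le mult_mono) (auto simp: abs_minus_commute)
    finally show "\<bar>1 / F x - 1 / F y\<bar> \<le> (L1 / (c*c)) * \<bar>x - y\<bar>" by simp
  qed
qed

lemma deriv_lip:
  assumes "\<And>x. x \<in> {a..b} \<Longrightarrow> (F has_real_derivative F' x) (at x within {a..b})"
    and "\<And>x. x \<in> {a..b} \<Longrightarrow> \<bar>F' x\<bar> \<le> D" "x \<in> {a..b}" "y \<in> {a..b}"
  shows "\<bar>F x - F y\<bar> \<le> D * \<bar>x - y\<bar>"
  using field_differentiable_bound[of "{a..b}" F F' D x y] assms by auto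

lemma lipb_deriv:
  assumes "\<And>x. x \<in> {a..b} \<Longrightarrow> (F has_real_derivative F' x) (at x within {a..b})"
    and "\<And>x. x \<in> {a..b} \<Longrightarrow> \<bar>F' x\<bar> \<le> D"
  shows "lipb {a..b} F"
  unfolding lipb_def
proof (intro conjI exI ballI)
  fix x y assume "x \<in> {a..b}" "y \<in> {a..b}"
  thus "\<bar>F x - F y\<bar> \<le> D * \<bar>x - y\<bar>" using deriv_lip[OF assms] by blast
next
  fix x assume x: "x \<in> {a..b}"
  hence ab: "a \<in> {a..b}" by auto
  have D0: "0 \<le> D" using assms(2)[OF x] by linarith
  have "\<bar>F x - F a\<bar> \<le> D * \<bar>x - a\<bar>" using deriv_lip[OF assms x ab] .
  also have "\<dots> \<le> D * (b - a)" using x D0 by (intro mult_left_mono) auto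
  finally show "\<bar>F x\<bar> \<le> \<bar>F a\<bar> + D * (b - a)" by linarith
qed

lemma lipb_cont_deriv:
  assumes "\<And>x. x \<in> {a..b} \<Longrightarrow> (F has_real_derivative F' x) (at x within {a..b})"
    and "continuous_on {a..b} F'"
  shows "lipb {a..b} F"
proof -
  obtain D where "\<forall>x\<in>{a..b}. \<bar>F' x\<bar> \<le> D" using cont_bound[OF _ assms(2)] by auto
  thus ?thesis using lipb_deriv[OF assms(1)] by blast
qed

lemma taylor1:
  assumes "\<And>x. x \<in> {a..b} \<Longrightarrow> (F has_real_derivative F' x) (at x within {a..b})"
    and "\<And>x y. x \<in> {a..b} \<Longrightarrow> y \<in> {a..b} \<Longrightarrow> \<bar>F' x - F' y\<bar> \<le> L * \<bar>x - y\<bar>"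
    and x: "x \<in> {a..b}" and y: "y \<in> {a..b}"
  shows "\<bar>F y - F x - F' x * (y - x)\<bar> \<le> L * (y - x)\<^sup>2"
proof (cases "x = y")
  case True thus ?thesis by simp
next
  case False
  have L0: "L \<ge> 0"
  proof -
    have "0 \<le> L * \<bar>x - y\<bar>" using assms(2)[OF x y] by (meson abs_ge_zero order_trans)
    thus ?thesis using False by (simp add: zero_le_mult_iff)
  qed
  let ?S = "{min x y..max x y}"
  have sub: "?S \<subseteq> {a..b}" using x y by auto
  have der: "((\<lambda>t. F t - F' x * t) has_real_derivative (F' t - F' x)) (at t within ?S)" if "t \<in> ?S" for t
    using sub that
    by (auto intro!: derivative_eq_intros has_field_derivative_subset[OF assms(1)])
  have bd: "\<bar>F' t - F' x\<bar> \<le> L * \<bar>y - x\<bar>" if "t \<in> ?S" for t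
  proof -
    have "\<bar>F' t - F' x\<bar> \<le> L * \<bar>t - x\<bar>" using assms(2) sub that x by blast
    moreover note L0
    moreover have "\<bar>t - x\<bar> \<le> \<bar>y - x\<bar>" using that by auto
    ultimately show ?thesis by (meson mult_left_mono order_trans)
  qed
  have "\<bar>(F y - F' x * y) - (F x - F' x * x)\<bar> \<le> L * \<bar>y - x\<bar> * \<bar>y - x\<bar>"
    using field_differentiable_bound[of ?S "\<lambda>t. F t - F' x * t" "\<lambda>t. F' t - F' x" "L * \<bar>y - x\<bar>" y x]
      der bd by auto
  thus ?thesis by (simp add: power2_eq_square algebra_simps abs_mult_self_eq)
qed

lemma lipbE':
  assumes "lipb K F"
  obtains M L where "\<forall>x\<in>K. \<bar>F x\<bar> \<le> M" "\<forall>x\<in>K. \<forall>y\<in>K. \<bar>F x - F y\<bar> \<le> L * \<bar>x - y\<bar>" "L \<ge> 0" "M \<ge> 0"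
proof -
  obtain M L where 1: "\<forall>x\<in>K. \<bar>F x\<bar> \<le> M" "\<forall>x\<in>K. \<forall>y\<in>K. \<bar>F x - F y\<bar> \<le> L * \<bar>x - y\<bar>"
    using assms by (rule lipbE)
  have "\<forall>x\<in>K. \<forall>y\<in>K. \<bar>F x - F y\<bar> \<le> max L 0 * \<bar>x - y\<bar>"
    using 1(2) by (meson abs_ge_zero dual_order.trans max.cobounded1 mult_right_mono)
  moreover have "\<forall>x\<in>K. \<bar>F x\<bar> \<le> max M 0" using 1(1) by (meson max.coboundedI1)
  ultimately show ?thesis using that by fastforce
qed

lemma cell_facts:
  fixes n :: nat and k :: nat and eps r :: real
  assumes n: "n > 0" and k: "k < n" and r: "r = (\<bar>eps\<bar> + 1) / n"
  shows "{real k / n - r .. real k / n + r} \<subseteq> {-r .. 1 + r}"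
    "real k / n \<in> {real k / n - r .. real k / n + r}"
    "real (Suc k) / n \<in> {real k / n - r .. real k / n + r}"
    "(real k + eps) / n \<in> {real k / n - r .. real k / n + r}"
proof -
  have rn: "r \<ge> 1 / n" using r n by (simp add: divide_right_mono)
  have n1: "1 / real n > 0" using n by simp
  have r0: "r \<ge> 0" using r by simp
  have kn: "real k / n \<le> 1 - 1/n" using k n by (simp add: field_simps)
  have k0: "real k / n \<ge> 0" by simp
  have "1 / real n > 0" using n by simp
  hence "real k / n + r \<le> 1 + r" "-r \<le> real k / n - r" using kn k0 by linarith+
  thus "{real k / n - r .. real k / n + r} \<subseteq> {-r .. 1 + r}" by (meson atLeastatMost_subset_iff)
  show "real k / n \<in> {real k / n - r .. real k / n + r}" using r0 by auto
  have "real (Suc k) / n = real k / n + 1 / n" by (simp add: add_divide_distrib)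
  thus "real (Suc k) / n \<in> {real k / n - r .. real k / n + r}" 
    unfolding atLeastAtMost_iff using rn r0 n1 by linarith
  have h: "\<bar>eps / n\<bar> \<le> r" using r n by (simp add: divide_right_mono)
  have "(real k + eps) / n = real k / n + eps / n" by (simp add: add_divide_distrib)
  thus "(real k + eps) / n \<in> {real k / n - r .. real k / n + r}"
    unfolding atLeastAtMost_iff using abs_le_D1[OF h] abs_le_D2[OF h] by linarith
qed

lemma riemann1:
  fixes phi Phi :: "real \<Rightarrow> real" and n :: nat and eps a b L :: real
  assumes n: "n > 0" and K: "{-((\<bar>eps\<bar>+1)/n) .. 1 + (\<bar>eps\<bar>+1)/n} \<subseteq> {a..b}"
    and dPhi: "\<And>x. x \<in> {a..b} \<Longrightarrow> (Phi has_real_derivative phi x) (at x within {a..b})"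
    and lip: "\<And>x y. x \<in> {a..b} \<Longrightarrow> y \<in> {a..b} \<Longrightarrow> \<bar>phi x - phi y\<bar> \<le> L * \<bar>x - y\<bar>"
    and L0: "L \<ge> 0"
  shows "\<bar>(\<Sum>k<n. phi ((real k + eps) / n)) / n - (Phi 1 - Phi 0)\<bar> \<le> 2 * L * ((\<bar>eps\<bar>+1)/n)"
proof -
  define r where "r = (\<bar>eps\<bar>+1)/n"
  define c where "c = (\<lambda>k::nat. (real k + eps) / n)"
  have cellb: "\<bar>(Phi (real (Suc k) / n) - Phi (real k / n)) - phi (c k) / n\<bar> \<le> 2 * L * r / n"
    if k: "k < n" for k
  proof -
    let ?J = "{real k / n - r .. real k / n + r}"
    note cf = cell_facts[OF n k r_def]
    have JK: "?J \<subseteq> {a..b}" using cf(1) K r_def by blast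
    have der: "((\<lambda>t. Phi t - phi (c k) * t) has_real_derivative (phi t - phi (c k))) (at t within ?J)"
      if "t \<in> ?J" for t
      using JK that by (auto intro!: derivative_eq_intros has_field_derivative_subset[OF dPhi])
    have bd: "\<bar>phi t - phi (c k)\<bar> \<le> 2 * L * r" if "t \<in> ?J" for t
    proof -
      have "\<bar>phi t - phi (c k)\<bar> \<le> L * \<bar>t - c k\<bar>" using lip JK that cf(4) c_def by blast
      also have "\<dots> \<le> L * (2 * r)" using that cf(4) c_def L0 by (intro mult_left_mono) auto
      finally show ?thesis by simp
    qed
    define y where "y = real (Suc k) / n"
    define x where "x = real k / n"
    have e: "y = x + 1 / n" using n unfolding x_def y_def by (simp add: field_simps)
    have "\<bar>(Phi y - phi (c k) * y) - (Phi x - phi (c k) * x)\<bar> \<le> 2 * L * r * \<bar>y - x\<bar>"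
      unfolding x_def y_def by (rule deriv_lip[OF der bd cf(3) cf(2)])
    moreover have "(Phi y - phi (c k) * y) - (Phi x - phi (c k) * x) = (Phi y - Phi x) - phi (c k) / n"
      "\<bar>y - x\<bar> = 1 / n" by (simp_all add: e algebra_simps)
    ultimately show ?thesis unfolding x_def[symmetric] y_def[symmetric] by simp
  qed
  have tel: "(\<Sum>k<n. Phi (real (Suc k) / n) - Phi (real k / n)) = Phi 1 - Phi 0"
    using sum_lessThan_telescope[of "\<lambda>k. Phi (real k / n)" n] n by simp
  have "\<bar>(\<Sum>k<n. (Phi (real (Suc k) / n) - Phi (real k / n)) - phi (c k) / n)\<bar> \<le> (\<Sum>k<n. 2 * L * r / n)"
    by (rule order_trans[OF sum_abs]) (intro sum_mono cellb, simp)
  also have "\<dots> = 2 * L * r" using n by simp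
  moreover have "(\<Sum>k<n. (Phi (real (Suc k) / n) - Phi (real k / n)) - phi (c k) / n)
     = (\<Sum>k<n. (Phi (real (Suc k) / n) - Phi (real k / n))) - (\<Sum>k<n. phi (c k) / n)"
    by (rule sum_subtractf)
  ultimately have "\<bar>(Phi 1 - Phi 0) - (\<Sum>k<n. phi (c k)) / n\<bar> \<le> 2 * L * r"
    by (simp only: tel sum_divide_distrib)
  thus ?thesis unfolding r_def c_def by (simp add: abs_minus_commute)
qed

lemma riemann2:
  fixes phi phi' Phi :: "real \<Rightarrow> real" and n :: nat and eps a b L :: real
  assumes n: "n > 0" and K: "{-((\<bar>eps\<bar>+1)/n) .. 1 + (\<bar>eps\<bar>+1)/n} \<subseteq> {a..b}"
    and dPhi: "\<And>x. x \<in> {a..b} \<Longrightarrow> (Phi has_real_derivative phi x) (at x within {a..b})"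
    and dphi: "\<And>x. x \<in> {a..b} \<Longrightarrow> (phi has_real_derivative phi' x) (at x within {a..b})"
    and lip: "\<And>x y. x \<in> {a..b} \<Longrightarrow> y \<in> {a..b} \<Longrightarrow> \<bar>phi' x - phi' y\<bar> \<le> L * \<bar>x - y\<bar>"
    and L0: "L \<ge> 0"
  shows "\<bar>(\<Sum>k<n. phi ((real k + eps) / n)) - n * (Phi 1 - Phi 0)
          - (eps - 1/2) * ((\<Sum>k<n. phi' ((real k + eps) / n)) / n)\<bar> \<le> 4 * L * ((\<bar>eps\<bar>+1)/n)^2 * n"
proof -
  define r where "r = (\<bar>eps\<bar>+1)/n"
  define c where "c = (\<lambda>k::nat. (real k + eps) / n)"
  have cellb: "\<bar>(Phi (real (Suc k) / n) - Phi (real k / n)) - phi (c k) / n - phi' (c k) * (1 - 2*eps) / (2 * n^2)\<bar> \<le> 4 * L * r^2 / n"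
    if k: "k < n" for k
  proof -
    let ?J = "{real k / n - r .. real k / n + r}"
    note cf = cell_facts[OF n k r_def]
    have JK: "?J \<subseteq> {a..b}" using cf(1) K r_def by blast
    have ck: "c k \<in> {a..b}" using cf(4) JK c_def by blast
    have der: "((\<lambda>t. Phi t - phi (c k) * t - phi' (c k) * (t - c k)^2 / 2) has_real_derivative
         (phi t - phi (c k) - phi' (c k) * (t - c k))) (at t within ?J)"
      if "t \<in> ?J" for t
      using JK that by (auto intro!: derivative_eq_intros has_field_derivative_subset[OF dPhi] simp: field_simps)
    have bd: "\<bar>phi t - phi (c k) - phi' (c k) * (t - c k)\<bar> \<le> 4 * L * r^2" if "t \<in> ?J" for t
    proof -
      have tK: "t \<in> {a..b}" using JK that by blast
      have "\<bar>phi t - phi (c k) - phi' (c k) * (t - c k)\<bar> \<le> L * (t - c k)^2"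
        by (rule taylor1[OF dphi lip ck tK])
      also have "\<dots> \<le> L * (2 * r)^2"
      proof -
        have "\<bar>t - c k\<bar> \<le> 2 * r" using that cf(4) unfolding c_def by auto
        hence "\<bar>t - c k\<bar>^2 \<le> (2 * r)^2" by (intro power_mono) auto
        thus ?thesis using L0 by (intro mult_left_mono) auto
      qed
      finally show ?thesis by (simp add: power2_eq_square)
    qed
    define y where "y = real (Suc k) / n"
    define x where "x = real k / n"
    have e: "y = x + 1 / n" using n unfolding x_def y_def by (simp add: field_simps)
    have "\<bar>(Phi y - phi (c k) * y - phi' (c k) * (y - c k)^2 / 2)
          - (Phi x - phi (c k) * x - phi' (c k) * (x - c k)^2 / 2)\<bar>
       \<le> 4 * L * r^2 * \<bar>y - x\<bar>"
      unfolding x_def y_def by (rule deriv_lip[OF der bd cf(3) cf(2)])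
    moreover have "(y - c k)^2 / 2 - (x - c k)^2 / 2 = (1 - 2*eps) / (2 * n^2)"
      using n unfolding c_def e x_def by (simp add: field_simps power2_eq_square)
    moreover have "(Phi y - phi (c k) * y - phi' (c k) * (y - c k)^2 / 2)
          - (Phi x - phi (c k) * x - phi' (c k) * (x - c k)^2 / 2)
        = (Phi y - Phi x) - phi (c k) / n - phi' (c k) * ((y - c k)^2 / 2 - (x - c k)^2 / 2)"
      "\<bar>y - x\<bar> = 1 / n" by (simp_all add: e algebra_simps)
    ultimately show ?thesis unfolding x_def[symmetric] y_def[symmetric] by simp
  qed
  have tel: "(\<Sum>k<n. Phi (real (Suc k) / n) - Phi (real k / n)) = Phi 1 - Phi 0"
    using sum_lessThan_telescope[of "\<lambda>k. Phi (real k / n)" n] n by simp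
  have "\<bar>(\<Sum>k<n. (Phi (real (Suc k) / n) - Phi (real k / n)) - phi (c k) / n - phi' (c k) * (1 - 2*eps) / (2 * n^2))\<bar>
     \<le> (\<Sum>k<n. 4 * L * r^2 / n)"
    by (rule order_trans[OF sum_abs]) (intro sum_mono cellb, simp)
  also have "\<dots> = 4 * L * r^2" using n by simp
  moreover have "(\<Sum>k<n. (Phi (real (Suc k) / n) - Phi (real k / n)) - phi (c k) / n - phi' (c k) * (1 - 2*eps) / (2 * n^2))
     = (\<Sum>k<n. (Phi (real (Suc k) / n) - Phi (real k / n))) - (\<Sum>k<n. phi (c k) / n) - (\<Sum>k<n. phi' (c k) * (1 - 2*eps) / (2 * n^2))"
    by (simp only: sum_subtractf[of "\<lambda>k. (Phi (real (Suc k) / n) - Phi (real k / n)) - phi (c k) / n"]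
        sum_subtractf[of "\<lambda>k. (Phi (real (Suc k) / n) - Phi (real k / n))"])
  moreover have "(\<Sum>k<n. phi' (c k) * (1 - 2*eps) / (2 * n^2)) = (1 - 2*eps) / (2 * n^2) * (\<Sum>k<n. phi' (c k))"
    by (simp add: sum_distrib_left sum_divide_distrib[symmetric] algebra_simps)
  ultimately have 1: "\<bar>(Phi 1 - Phi 0) - (\<Sum>k<n. phi (c k)) / n - (1 - 2*eps) / (2 * n^2) * (\<Sum>k<n. phi' (c k))\<bar> \<le> 4 * L * r^2"
    by (simp only: tel sum_divide_distrib)
  have "(\<Sum>k<n. phi (c k)) - n * (Phi 1 - Phi 0) - (eps - 1/2) * ((\<Sum>k<n. phi' (c k)) / n)
      = - n * ((Phi 1 - Phi 0) - (\<Sum>k<n. phi (c k)) / n - (1 - 2*eps) / (2 * n^2) * (\<Sum>k<n. phi' (c k)))"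
    using n by (simp add: field_simps power2_eq_square)
  hence "\<bar>(\<Sum>k<n. phi (c k)) - n * (Phi 1 - Phi 0) - (eps - 1/2) * ((\<Sum>k<n. phi' (c k)) / n)\<bar>
      = n * \<bar>(Phi 1 - Phi 0) - (\<Sum>k<n. phi (c k)) / n - (1 - 2*eps) / (2 * n^2) * (\<Sum>k<n. phi' (c k))\<bar>"
    by (simp add: abs_mult)
  also have "\<dots> \<le> n * (4 * L * r^2)" using 1 by (intro mult_left_mono) auto
  finally show ?thesis unfolding r_def c_def by (simp add: algebra_simps)
qed

fun U :: "(nat \<Rightarrow> real) \<Rightarrow> nat \<Rightarrow> real" where
  "U d 0 = d 0"
| "U d (Suc k) = d (Suc k) - 1 / U d k"

lemma U_lower:
  assumes mu: "\<mu> \<ge> 1" and d: "\<And>k. k < n \<Longrightarrow> d k \<ge> \<mu> + 1 / \<mu>" and k: "k < n"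
  shows "U d k \<ge> \<mu>"
  using k
proof (induction k)
  case 0
  have "1 / \<mu> \<ge> 0" using mu by simp
  thus ?case using d[OF "0"] unfolding U.simps by linarith
next
  case (Suc k)
  hence "U d k \<ge> \<mu>" by simp
  hence "1 / U d k \<le> 1 / \<mu>" using mu by (intro divide_left_mono) auto
  thus ?case using d[OF Suc.prems] by simp
qed

lemma Dr_prod:
  assumes "\<And>k. k < m \<Longrightarrow> U d k \<noteq> 0"
  shows "Dr d m = (\<Prod>k<m. U d k)"
  using assms
proof (induction m rule: less_induct)
  case (less m)
  show ?case
  proof (cases m)
    case 0 thus ?thesis by simp
  next
    case (Suc j)
    show ?thesis
    proof (cases j)
      case 0 thus ?thesis using Suc by simp
    next
      case (Suc i)
      have IH1: "Dr d j = (\<Prod>k<j. U d k)" using less Suc \<open>m = Suc j\<close> by simp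
      have IH2: "Dr d i = (\<Prod>k<i. U d k)" using less Suc \<open>m = Suc j\<close> by simp
      have nz: "U d i \<noteq> 0" using less.prems Suc \<open>m = Suc j\<close> by simp
      have "Dr d m = d j * (U d i * (\<Prod>k<i. U d k)) - (\<Prod>k<i. U d k)"
        using IH1 IH2 Suc \<open>m = Suc j\<close> by simp
      also have "\<dots> = (d j - 1 / U d i) * U d i * (\<Prod>k<i. U d k)"
        using nz by (simp add: field_simps)
      also have "\<dots> = (\<Prod>k<m. U d k)" using Suc \<open>m = Suc j\<close> by (simp add: mult.assoc)
      finally show ?thesis .
    qed
  qed
qed

lemma err_sum:
  fixes E R :: "nat \<Rightarrow> real"
  assumes rec: "\<And>k. Suc k < Suc m \<Longrightarrow> E (Suc k) \<le> c * E k + R (Suc k)"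
    and E0: "\<And>k. E k \<ge> 0" and c: "0 \<le> c"
  shows "(1 - c) * (\<Sum>k<Suc m. E k) \<le> E 0 + (\<Sum>k<m. R (Suc k))"
proof -
  have "(\<Sum>k<Suc m. E k) = E 0 + (\<Sum>k<m. E (Suc k))" by (rule sum.lessThan_Suc_shift)
  also have "\<dots> \<le> E 0 + (\<Sum>k<m. c * E k + R (Suc k))" using rec by (intro add_left_mono sum_mono) auto
  also have "\<dots> = E 0 + c * (\<Sum>k<m. E k) + (\<Sum>k<m. R (Suc k))" by (simp add: sum.distrib sum_distrib_left)
  also have "\<dots> \<le> E 0 + c * (\<Sum>k<Suc m. E k) + (\<Sum>k<m. R (Suc k))"
    using c E0 by (intro add_mono mult_left_mono) auto
  finally show ?thesis by (simp add: algebra_simps)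
qed

definition Aq :: "real \<Rightarrow> nat \<Rightarrow> real" where
  "Aq \<theta> k = \<theta> ^ (Suc k) * (1 - \<theta>) / (1 - \<theta> ^ Suc k)"

lemma pow_lt1: "0 < (\<theta>::real) \<Longrightarrow> \<theta> < 1 \<Longrightarrow> \<theta> ^ Suc k < 1"
  by (rule power_Suc_less_one)

lemma Aq_nonneg: "0 < \<theta> \<Longrightarrow> \<theta> < 1 \<Longrightarrow> Aq \<theta> k \<ge> 0"
  unfolding Aq_def using pow_lt1[of \<theta> k] by simp

lemma Aq_le: assumes "0 < \<theta>" "\<theta> < 1" shows "Aq \<theta> k \<le> \<theta> ^ Suc k"
proof -
  have "\<theta> ^ Suc k \<le> \<theta>" using assms by (simp add: power_le_one mult_left_le)
  hence "(1 - \<theta>) / (1 - \<theta> ^ Suc k) \<le> 1" using pow_lt1[OF assms, of k] by simp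
  thus ?thesis unfolding Aq_def using assms
    by (metis mult_left_le times_divide_eq_right zero_less_power less_eq_real_def)
qed

lemma Aq_rec: assumes "0 < \<theta>" "\<theta> < 1"
  shows "1 / (1 + Aq \<theta> k) = 1 - Aq \<theta> (Suc k) / \<theta>"
proof -
  have a: "1 - \<theta> ^ Suc k > 0" "1 - \<theta> ^ Suc (Suc k) > 0" using pow_lt1[OF assms, of k] pow_lt1[OF assms, of "Suc k"] by auto
  have e: "1 + Aq \<theta> k = (1 - \<theta> ^ Suc (Suc k)) / (1 - \<theta> ^ Suc k)"
    unfolding Aq_def using a by (simp add: field_simps)
  show ?thesis unfolding e Aq_def using a assms by (simp add: field_simps)
qed

lemma Aq_prod: assumes "0 < \<theta>" "\<theta> < 1"
  shows "(\<Prod>k<n. 1 + Aq \<theta> k) = (1 - \<theta> ^ Suc n) / (1 - \<theta>)"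
proof (induction n)
  case 0 thus ?case using assms by simp
next
  case (Suc n)
  have a: "1 - \<theta> ^ Suc n > 0" using pow_lt1[OF assms] by auto
  have e: "1 + Aq \<theta> n = (1 - \<theta> ^ Suc (Suc n)) / (1 - \<theta> ^ Suc n)"
    unfolding Aq_def using a by (simp add: field_simps)
  have "1 - \<theta> ^ Suc (Suc n) > 0" using pow_lt1[OF assms, of "Suc n"] by auto
  thus ?case using Suc a assms by (simp add: e)
qed

lemma sum_kpow: assumes "0 \<le> (\<theta>::real)" "\<theta> < 1"
  shows "(\<Sum>k<n. (real k + 1) * \<theta> ^ k) \<le> 1 / (1 - \<theta>)^2"
proof -
  have cf0: "(1 - \<theta>)^2 * (\<Sum>k<n. (real k + 1) * \<theta> ^ k) = 1 - (real n + 1) * \<theta>^n + real n * \<theta>^(Suc n)" for n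
  proof (induction n)
    case 0 thus ?case by simp
  next
    case (Suc n)
    have "(1 - \<theta>)^2 * (\<Sum>k<Suc n. (real k + 1) * \<theta> ^ k)
        = (1 - \<theta>)^2 * (\<Sum>k<n. (real k + 1) * \<theta> ^ k) + (1 - \<theta>)^2 * ((real n + 1) * \<theta> ^ n)"
      by (simp add: distrib_left)
    also have "\<dots> = 1 - (real n + 1) * \<theta>^n + real n * \<theta>^(Suc n) + (1 - \<theta>)^2 * ((real n + 1) * \<theta> ^ n)"
      using Suc.IH by simp
    also have "\<dots> = 1 - (real (Suc n) + 1) * \<theta>^(Suc n) + real (Suc n) * \<theta>^(Suc (Suc n))"
      by (simp add: algebra_simps power2_eq_square)
    finally show ?case .
  qed
  have nz: "(1 - \<theta>)^2 > 0" using assms by simp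
  have cf: "(\<Sum>k<n. (real k + 1) * \<theta> ^ k) = (1 - (real n + 1) * \<theta>^n + real n * \<theta>^(Suc n)) / (1 - \<theta>)^2"
    using cf0[of n] nz by (simp add: field_simps)
  have "(real n + 1) * \<theta>^n - real n * \<theta>^(Suc n) = \<theta>^n * (1 + real n * (1 - \<theta>))" by (simp add: algebra_simps)
  also have "\<dots> \<ge> 0" using assms by simp
  finally show ?thesis unfolding cf using assms by (intro divide_right_mono) auto
qed

locale setting =
  fixes f f' f'' :: "real \<Rightarrow> real" and a b B :: real
  assumes a0: "a < 0" and b1: "1 < b"
  and df: "\<And>x. x \<in> {a..b} \<Longrightarrow> (f has_real_derivative f' x) (at x within {a..b})"
  and df': "\<And>x. x \<in> {a..b} \<Longrightarrow> (f' has_real_derivative f'' x) (at x within {a..b})"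
  and Bd: "\<And>x. x \<in> {a..b} \<Longrightarrow> \<bar>f'' x\<bar> \<le> B"
  and fgt: "\<And>x. x \<in> {a..b} \<Longrightarrow> f x > 2"
begin

abbreviation "K \<equiv> {a..b}"

definition "s x = sqrt ((f x)^2 - 4)"
definition "lam x = (f x + s x) / 2"
definition "g x = ln (lam x)"
definition "g' x = f' x * (1 / s x)"
definition "beta x = - (f' x * (1 / lam x) * (1 / s x) * (1 / s x))"
definition "h x = (ln (lam x) - ln (s x)) / 2"
definition "psi x = 1 / lam x"
definition "psi' x = - (f' x * (1 / lam x) * (1 / s x))"

lemma K_ne: "K \<noteq> {}" and zero_K: "0 \<in> K" and one_K: "1 \<in> K"
  using a0 b1 by auto

lemma cont_f: "continuous_on K f" using df by (rule DERIV_continuous_on)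
lemma cont_f': "continuous_on K f'" using df' by (rule DERIV_continuous_on)

lemma f_min: obtains c where "c > 0" "\<And>x. x \<in> K \<Longrightarrow> 2 + c \<le> f x"
proof -
  have "continuous_on K (\<lambda>x. f x - 2)" using cont_f by (intro continuous_intros)
  then obtain c where "c > 0" "\<forall>x\<in>K. c \<le> f x - 2"
    using cont_pos_min[of K "\<lambda>x. f x - 2"] K_ne fgt by auto
  thus ?thesis using that[of c] by force
qed

lemma s_min: obtains s0 where "s0 > 0" "\<And>x. x \<in> K \<Longrightarrow> s0 \<le> s x"
proof -
  obtain c where c: "c > 0" "\<And>x. x \<in> K \<Longrightarrow> 2 + c \<le> f x" using f_min by blast
  have "sqrt (4 * c) \<le> s x" if x: "x \<in> K" for x
  proof -
    have "(2 + c)^2 \<le> (f x)^2" using c(2)[OF x] c(1) by (intro power_mono) auto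
    moreover have "(2 + c)^2 \<ge> 4 + 4 * c" by (simp add: power2_eq_square algebra_simps)
    ultimately have "4 * c \<le> (f x)^2 - 4" by linarith
    thus ?thesis unfolding s_def by simp
  qed
  moreover have "sqrt (4 * c) > 0" using c by simp
  ultimately show ?thesis using that[of "sqrt (4 * c)"] by blast
qed

lemma s_pos: "x \<in> K \<Longrightarrow> s x > 0"
  using s_min by (metis less_le_trans)

lemma fsq: "x \<in> K \<Longrightarrow> (f x)^2 - 4 > 0"
proof -
  assume "x \<in> K"
  hence "2 < f x" by (rule fgt)
  hence "2^2 < (f x)^2" by (intro power_strict_mono) auto
  thus ?thesis by simp
qed

lemma s_sq: "x \<in> K \<Longrightarrow> (s x)^2 = (f x)^2 - 4"
  unfolding s_def using fsq[of x] by simp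

lemma lam_pos: "x \<in> K \<Longrightarrow> lam x > 0"
  unfolding lam_def using fgt[of x] s_pos[of x] by simp

lemma lam_inv: "x \<in> K \<Longrightarrow> 1 / lam x = (f x - s x) / 2"
proof -
  assume x: "x \<in> K"
  have "(f x + s x) * (f x - s x) = 4" using s_sq[OF x] by (simp add: algebra_simps power2_eq_square)
  thus ?thesis unfolding lam_def using lam_pos[OF x] unfolding lam_def
    by (simp add: field_simps)
qed

lemma lam_plus_inv: "x \<in> K \<Longrightarrow> lam x + 1 / lam x = f x"
  using lam_inv[of x] unfolding lam_def by (simp add: field_simps)

lemma lam_minus_inv: "x \<in> K \<Longrightarrow> lam x - 1 / lam x = s x"
  using lam_inv[of x] unfolding lam_def by (simp add: field_simps)

lemma lam_min: obtains \<mu> where "\<mu> > 1" "\<And>x. x \<in> K \<Longrightarrow> \<mu> \<le> lam x"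
proof -
  obtain s0 where s0: "s0 > 0" "\<And>x. x \<in> K \<Longrightarrow> s0 \<le> s x" using s_min by blast
  have "1 + s0 / 2 \<le> lam x" if "x \<in> K" for x
    using s0(2)[OF that] fgt[OF that] unfolding lam_def by simp
  moreover have "1 + s0 / 2 > 1" using s0(1) by simp
  ultimately show ?thesis using that[of "1 + s0 / 2"] by blast
qed

lemma ds: assumes x: "x \<in> K"
  shows "(s has_real_derivative (f x * f' x * (1 / s x))) (at x within K)"
proof -
  have d1: "((\<lambda>x. (f x)^2 - 4) has_real_derivative 2 * f x * f' x) (at x within K)"
    using x by (auto intro!: derivative_eq_intros df)
  have "((\<lambda>x. sqrt ((f x)^2 - 4)) has_real_derivative (inverse (sqrt ((f x)^2 - 4)) / 2 * (2 * f x * f' x))) (at x within K)"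
    by (rule DERIV_chain2[OF DERIV_real_sqrt[OF fsq[OF x]] d1])
  moreover have "inverse (sqrt ((f x)^2 - 4)) / 2 * (2 * f x * f' x) = f x * f' x * (1 / s x)"
    by (simp add: s_def field_simps)
  ultimately show ?thesis unfolding s_def[abs_def] by simp
qed


lemma cont_s: "continuous_on K s" using ds by (rule DERIV_continuous_on)

lemma dlam: assumes x: "x \<in> K"
  shows "(lam has_real_derivative (f' x * lam x * (1 / s x))) (at x within K)"
proof -
  have d: "((\<lambda>x. (f x + s x) / 2) has_real_derivative ((f' x + f x * f' x * (1 / s x)) / 2)) (at x within K)"
    using x by (auto intro!: derivative_eq_intros df ds)
  have e: "(f' x + f x * f' x * (1 / s x)) / 2 = f' x * lam x * (1 / s x)"
    using s_pos[OF x] unfolding lam_def by (simp add: field_simps)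
  have eqf: "(\<lambda>x. (f x + s x) / 2) = lam" by (rule ext) (simp add: lam_def)
  show ?thesis using DERIV_cong[OF d[unfolded eqf] e] .
qed

lemma dg: assumes x: "x \<in> K"
  shows "(g has_real_derivative g' x) (at x within K)"
proof -
  have "((\<lambda>x. ln (lam x)) has_real_derivative (f' x * lam x * (1 / s x)) / lam x) (at x within K)"
    using x lam_pos[OF x] by (auto intro!: derivative_eq_intros dlam)
  moreover have "(f' x * lam x * (1 / s x)) / lam x = g' x"
    using lam_pos[OF x] unfolding g'_def by (simp add: field_simps)
  ultimately show ?thesis unfolding g_def[abs_def] by simp
qed

lemma dh: assumes x: "x \<in> K"
  shows "(h has_real_derivative beta x) (at x within K)"
proof -
  have "((\<lambda>x. (ln (lam x) - ln (s x)) / 2) has_real_derivative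
      ((f' x * lam x * (1 / s x)) / lam x - (f x * f' x * (1 / s x)) / s x) / 2) (at x within K)"
  proof -
    have d1: "((\<lambda>x. ln (lam x)) has_real_derivative (f' x * lam x * (1 / s x)) / lam x) (at x within K)"
      using x lam_pos[OF x] by (auto intro!: derivative_eq_intros dlam)
    have d2: "((\<lambda>x. ln (s x)) has_real_derivative (f x * f' x * (1 / s x)) / s x) (at x within K)"
      using x s_pos[OF x] by (auto intro!: derivative_eq_intros ds)
    show ?thesis using DERIV_cdivide[OF DERIV_diff[OF d1 d2], of 2] .
  qed
  moreover have "((f' x * lam x * (1 / s x)) / lam x - (f x * f' x * (1 / s x)) / s x) / 2 = beta x"
  proof -
    have l: "1 / lam x = (f x - s x) / 2" by (rule lam_inv[OF x])
    show ?thesis using lam_pos[OF x] s_pos[OF x] unfolding beta_def l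
      by (simp add: field_simps)
  qed
  ultimately show ?thesis unfolding h_def[abs_def] by simp
qed

lemma dpsi: assumes x: "x \<in> K"
  shows "(psi has_real_derivative psi' x) (at x within K)"
proof -
  have "((\<lambda>x. 1 / lam x) has_real_derivative - (f' x * lam x * (1 / s x)) / (lam x)^2) (at x within K)"
    using x lam_pos[OF x] by (auto intro!: derivative_eq_intros dlam simp: power2_eq_square)
  moreover have "- (f' x * lam x * (1 / s x)) / (lam x)^2 = psi' x"
    using lam_pos[OF x] unfolding psi'_def by (simp add: field_simps power2_eq_square)
  ultimately show ?thesis unfolding psi_def[abs_def] by simp
qed

lemma lipb_f: "lipb K f" using df cont_f' by (rule lipb_cont_deriv)
lemma lipb_f': "lipb K f'" using df' Bd by (rule lipb_deriv)
lemma lipb_s: "lipb K s"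
proof (rule lipb_cont_deriv[OF ds])
  show "continuous_on K (\<lambda>x. f x * f' x * (1 / s x))"
    by (intro continuous_intros cont_f cont_f' cont_s) (use s_pos in fastforce)
qed
lemma lipb_lam: "lipb K lam"
proof -
  have "lipb K (\<lambda>x. (f x + s x) * (1/2))" by (intro lipb_mult lipb_add lipb_f lipb_s lipb_const)
  moreover have "(\<lambda>x. (f x + s x) * (1/2)) = lam" by (auto simp: lam_def[abs_def])
  ultimately show ?thesis by simp
qed
lemma lipb_inv_s: "lipb K (\<lambda>x. 1 / s x)"
proof -
  obtain s0 where s0: "s0 > 0" "\<And>x. x \<in> K \<Longrightarrow> s0 \<le> s x" using s_min by blast
  show ?thesis by (rule lipb_inverse[OF lipb_s s0(1)]) (use s0 in force)
qed
lemma lipb_inv_lam: "lipb K (\<lambda>x. 1 / lam x)"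
proof -
  obtain m where m: "m > 1" "\<And>x. x \<in> K \<Longrightarrow> m \<le> lam x" using lam_min by blast
  show ?thesis by (rule lipb_inverse[OF lipb_lam, of 1]) (use m in force)+
qed
lemma lipb_g': "lipb K g'"
  unfolding g'_def[abs_def] by (intro lipb_mult lipb_f' lipb_inv_s)
lemma lipb_beta: "lipb K beta"
  unfolding beta_def[abs_def] by (intro lipb_minus lipb_mult lipb_f' lipb_inv_s lipb_inv_lam)
lemma lipb_psi': "lipb K psi'"
  unfolding psi'_def[abs_def] by (intro lipb_minus lipb_mult lipb_f' lipb_inv_s lipb_inv_lam)
lemma lipb_psibeta: "lipb K (\<lambda>x. psi x * beta x)"
  unfolding psi_def by (intro lipb_mult lipb_beta lipb_inv_lam)

lemma beta_ident: "x \<in> K \<Longrightarrow> lam x * beta x - psi' x = psi x * beta x"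
proof -
  assume x: "x \<in> K"
  have "beta x * (lam x - 1 / lam x) = psi' x"
    unfolding lam_minus_inv[OF x] beta_def psi'_def using s_pos[OF x] by (simp add: field_simps)
  thus ?thesis unfolding psi_def by (simp add: algebra_simps)
qed

end

context setting begin

definition "bnd F = (SOME M. M \<ge> 0 \<and> (\<forall>x\<in>K. \<bar>F x\<bar> \<le> M))"
definition "lipc F = (SOME L. L \<ge> 0 \<and> (\<forall>x\<in>K. \<forall>y\<in>K. \<bar>F x - F y\<bar> \<le> L * \<bar>x - y\<bar>))"
definition "mu = (SOME \<mu>. \<mu> > 1 \<and> (\<forall>x\<in>K. \<mu> \<le> lam x))"

lemma bnd: assumes "lipb K F" shows "bnd F \<ge> 0" "x \<in> K \<Longrightarrow> \<bar>F x\<bar> \<le> bnd F"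
proof -
  obtain M L where "\<forall>x\<in>K. \<bar>F x\<bar> \<le> M" "M \<ge> 0" using lipbE'[OF assms] by metis
  hence "\<exists>M. M \<ge> 0 \<and> (\<forall>x\<in>K. \<bar>F x\<bar> \<le> M)" by blast
  from someI_ex[OF this] show "bnd F \<ge> 0" "x \<in> K \<Longrightarrow> \<bar>F x\<bar> \<le> bnd F" unfolding bnd_def by auto
qed

lemma lipc: assumes "lipb K F" shows "lipc F \<ge> 0" "x \<in> K \<Longrightarrow> y \<in> K \<Longrightarrow> \<bar>F x - F y\<bar> \<le> lipc F * \<bar>x - y\<bar>"
proof -
  obtain M L where "\<forall>x\<in>K. \<forall>y\<in>K. \<bar>F x - F y\<bar> \<le> L * \<bar>x - y\<bar>" "L \<ge> 0" using lipbE'[OF assms] by metis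
  hence "\<exists>L. L \<ge> 0 \<and> (\<forall>x\<in>K. \<forall>y\<in>K. \<bar>F x - F y\<bar> \<le> L * \<bar>x - y\<bar>)" by blast
  from someI_ex[OF this] show "lipc F \<ge> 0" "x \<in> K \<Longrightarrow> y \<in> K \<Longrightarrow> \<bar>F x - F y\<bar> \<le> lipc F * \<bar>x - y\<bar>"
    unfolding lipc_def by auto
qed

lemma mu: "mu > 1" "x \<in> K \<Longrightarrow> mu \<le> lam x"
proof -
  obtain m where "m > 1" "\<And>x. x \<in> K \<Longrightarrow> m \<le> lam x" using lam_min by blast
  hence "\<exists>\<mu>. \<mu> > 1 \<and> (\<forall>x\<in>K. \<mu> \<le> lam x)" by blast
  from someI_ex[OF this] show "mu > 1" "x \<in> K \<Longrightarrow> mu \<le> lam x" unfolding mu_def by auto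
qed

lemma lam_ge1: "x \<in> K \<Longrightarrow> lam x \<ge> 1" using mu by force

abbreviation "Mb \<equiv> bnd beta"
abbreviation "Ml \<equiv> bnd lam"
abbreviation "Ll \<equiv> lipc lam"
abbreviation "Lpp \<equiv> lipc psi'"
abbreviation "Lpb \<equiv> lipc (\<lambda>x. psi x * beta x)"
abbreviation "\<Lambda> \<equiv> lam 0"
abbreviation "\<theta> \<equiv> 1 / (lam 0)^2"

lemma theta: "0 < \<theta>" "\<theta> < 1"
proof -
  have "lam 0 > 1" using mu zero_K by force
  hence l: "(lam 0)^2 > 1" by (simp add: one_less_power)
  thus "0 < \<theta>" by auto
  show "\<theta> < 1" using l by (simp add: divide_less_eq)
qed

definition "xx eps (n::nat) (k::nat) = (real k + eps) / real n"
definition "dd eps n k = f (xx eps n k)"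
definition "ww eps (n::nat) k = lam (xx eps n k) * (1 + Aq \<theta> k) * (1 + beta (xx eps n k) / real n)"

definition "good eps (n::nat) \<longleftrightarrow> n > 0 \<and> (\<bar>eps\<bar> + 1) / real n \<le> min (-a) (b - 1) \<and> Mb / real n \<le> (mu - 1) / (2 * mu)"

lemma good_eventually: "\<exists>N. \<forall>n\<ge>N. good eps n"
proof -
  define \<delta> where "\<delta> = min (-a) (b - 1)"
  have d: "\<delta> > 0" using a0 b1 unfolding \<delta>_def by simp
  define m where "m = (mu - 1) / (2 * mu)"
  have m: "m > 0" using mu unfolding m_def by simp
  obtain N1 :: nat where N1: "(\<bar>eps\<bar> + 1) / \<delta> < N1" using reals_Archimedean2 by blast
  obtain N2 :: nat where N2: "Mb / m < N2" using reals_Archimedean2 by blast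
  have "good eps n" if n: "n \<ge> max 1 (max N1 N2)" for n
  proof -
    have n0: "real n > 0" using n by simp
    have "(\<bar>eps\<bar> + 1) / \<delta> < n" using N1 n by linarith
    hence "\<bar>eps\<bar> + 1 < n * \<delta>" by (simp only: pos_divide_less_eq[OF d])
    hence 1: "(\<bar>eps\<bar> + 1) / n \<le> \<delta>" by (simp only: pos_divide_le_eq[OF n0]) (simp add: mult.commute)
    have "Mb / m < n" using N2 n by linarith
    hence "Mb < n * m" by (simp only: pos_divide_less_eq[OF m])
    hence 2: "Mb / n \<le> m" by (simp only: pos_divide_le_eq[OF n0]) (simp add: mult.commute)
    show ?thesis unfolding good_def using 1 2 n \<delta>_def m_def by auto
  qed
  thus ?thesis by blast
qed

lemma Mb0: "Mb \<ge> 0" by (rule bnd[OF lipb_beta])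

lemma good_facts:
  assumes g: "good eps n"
  shows "n > 0" "\<And>k. k < n \<Longrightarrow> xx eps n k \<in> K" "{-((\<bar>eps\<bar>+1)/n) .. 1 + (\<bar>eps\<bar>+1)/n} \<subseteq> K"
    "Mb / n \<le> 1 / 2" "Mb / n \<le> (mu - 1) / (2 * mu)"
proof -
  show n: "n > 0" using g unfolding good_def by auto
  show sub: "{-((\<bar>eps\<bar>+1)/n) .. 1 + (\<bar>eps\<bar>+1)/n} \<subseteq> K" using g unfolding good_def by auto
  show "xx eps n k \<in> K" if "k < n" for k
    using cell_facts(1,4)[OF n that refl] sub unfolding xx_def by blast
  show "Mb / n \<le> (mu - 1) / (2 * mu)" using g unfolding good_def by auto
  moreover have "(mu - 1) / (2 * mu) \<le> 1 / 2" using mu by (simp add: field_simps)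
  ultimately show "Mb / n \<le> 1 / 2" by linarith
qed

end

lemma t_plus_inv_mono: assumes "1 \<le> m" "m \<le> (t::real)" shows "m + 1/m \<le> t + 1/t"
proof -
  have "1 * 1 \<le> t * m" using assms by (intro mult_mono) auto
  hence "0 \<le> (t - m) * (t * m - 1)" using assms by (intro mult_nonneg_nonneg) auto
  hence "0 \<le> ((t - m) * (t * m - 1)) / (t * m)" using assms by simp
  moreover have "((t - m) * (t * m - 1)) / (t * m) = (t + 1/t) - (m + 1/m)" using assms
    by (simp add: field_simps)
  ultimately show ?thesis by simp
qed

lemma ln_diff_le: assumes "1 \<le> (x::real)" "1 \<le> y" shows "\<bar>ln x - ln y\<bar> \<le> \<bar>x - y\<bar>"
proof -
  have *: "ln u - ln v \<le> u - v" if "1 \<le> v" "v \<le> u" for u v :: real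
  proof -
    have "ln u - ln v = ln (u / v)" using that by (simp add: ln_div)
    also have "\<dots> \<le> u / v - 1" using that by (intro ln_le_minus_one) auto
    also have "\<dots> = (u - v) / v" using that by (simp add: field_simps)
    also have "\<dots> \<le> u - v" using that by (simp add: divide_le_eq mult_le_cancel_left1)
    finally show ?thesis .
  qed
  show ?thesis
  proof (cases "y \<le> x")
    case True
    have "ln y \<le> ln x" using True assms by simp
    thus ?thesis using *[OF assms(2) True] True by simp
  next
    case False
    have "ln x \<le> ln y" using False assms by simp
    thus ?thesis using *[OF assms(1), of y] False by simp
  qed
qed

context setting begin

lemma dd_eq: "good eps n \<Longrightarrow> k < n \<Longrightarrow> dd eps n k = lam (xx eps n k) + 1 / lam (xx eps n k)"
  unfolding dd_def using good_facts(2) lam_plus_inv by metis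

lemma U_ge: assumes g: "good eps n" and k: "k < n" shows "U (dd eps n) k \<ge> mu"
proof (rule U_lower[OF _ _ k])
  show "1 \<le> mu" using mu by simp
  fix j assume j: "j < n"
  have x: "xx eps n j \<in> K" using good_facts(2)[OF g j] .
  show "mu + 1 / mu \<le> dd eps n j" unfolding dd_eq[OF g j]
    by (rule t_plus_inv_mono) (use mu x in auto)
qed

lemma beta_small: assumes g: "good eps n" and k: "k < n"
  shows "\<bar>beta (xx eps n k) / n\<bar> \<le> Mb / n" "\<bar>beta (xx eps n k) / n\<bar> \<le> 1/2"
    "1 + beta (xx eps n k) / n \<ge> 1/2" "1 + beta (xx eps n k) / n \<ge> 1 - Mb / n"
proof -
  have x: "xx eps n k \<in> K" using good_facts(2)[OF g k] .
  have n: "real n > 0" using good_facts(1)[OF g] by simp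
  show 1: "\<bar>beta (xx eps n k) / n\<bar> \<le> Mb / n" using bnd(2)[OF lipb_beta x] n
    by (simp add: divide_right_mono)
  thus 2: "\<bar>beta (xx eps n k) / n\<bar> \<le> 1/2" using good_facts(4)[OF g] by linarith
  show "1 + beta (xx eps n k) / n \<ge> 1/2" using 2 by linarith
  show "1 + beta (xx eps n k) / n \<ge> 1 - Mb / n" using 1 by linarith
qed

lemma ww_ge: assumes g: "good eps n" and k: "k < n" shows "ww eps n k \<ge> (1 + mu) / 2"
proof -
  have x: "xx eps n k \<in> K" using good_facts(2)[OF g k] .
  have A: "1 + Aq \<theta> k \<ge> 1" using Aq_nonneg[OF theta] by simp
  have "Mb / n \<le> 1/2" by (rule good_facts(4)[OF g])
  hence p: "1 + beta (xx eps n k) / n \<ge> 1 - Mb / n" "1 - Mb / n \<ge> 0"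
    using beta_small(4)[OF g k] by linarith+
  have l: "lam (xx eps n k) \<ge> mu" "mu > 1" using mu x by auto
  hence l0: "0 \<le> lam (xx eps n k)" "0 \<le> lam (xx eps n k) * (1 + Aq \<theta> k)" using A by auto
  have "mu * 1 * (1 - Mb / n) \<le> ww eps n k" unfolding ww_def
    using l l0 A p by (intro mult_mono) auto
  moreover have "mu * (1 - (mu - 1) / (2 * mu)) \<le> mu * (1 - Mb / n)"
    using good_facts(5)[OF g] mu by (intro mult_left_mono) auto
  moreover have "mu * (1 - (mu - 1) / (2 * mu)) = (1 + mu) / 2" using mu by (simp add: field_simps)
  ultimately show ?thesis by linarith
qed

lemma xx_abs: assumes g: "good eps n" shows "\<bar>xx eps n k\<bar> \<le> (real k + 1) * (1 + \<bar>eps\<bar>) / n"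
proof -
  have n: "real n > 0" using good_facts(1)[OF g] by simp
  have "\<bar>real k + eps\<bar> \<le> real k + \<bar>eps\<bar>" by linarith
  also have "\<dots> \<le> (real k + 1) * (1 + \<bar>eps\<bar>)" by (simp add: algebra_simps)
  finally show ?thesis unfolding xx_def using n by (simp add: divide_right_mono)
qed

lemma lamp_near: assumes g: "good eps n" and k: "k < n"
  shows "\<bar>lam (xx eps n k) * (1 + beta (xx eps n k) / n) - \<Lambda>\<bar>
     \<le> (Ll * (1 + \<bar>eps\<bar>) + Ml * Mb) * (real k + 1) / n"
proof -
  have x: "xx eps n k \<in> K" using good_facts(2)[OF g k] .
  have n: "real n > 0" using good_facts(1)[OF g] by simp
  let ?x = "xx eps n k"
  have eq: "lam ?x * (1 + beta ?x / n) - \<Lambda> = (lam ?x - \<Lambda>) + lam ?x * (beta ?x / n)"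
    by (simp add: algebra_simps)
  have "\<bar>lam ?x * (1 + beta ?x / n) - \<Lambda>\<bar> = \<bar>(lam ?x - \<Lambda>) + lam ?x * (beta ?x / n)\<bar>"
    by (simp only: eq)
  also have "\<dots> \<le> \<bar>lam ?x - \<Lambda>\<bar> + \<bar>lam ?x * (beta ?x / n)\<bar>" by (rule abs_triangle_ineq)
  also have "\<dots> = \<bar>lam ?x - \<Lambda>\<bar> + \<bar>lam ?x\<bar> * \<bar>beta ?x / n\<bar>" by (simp only: abs_mult)
  also have "\<dots> \<le> Ll * ((real k + 1) * (1 + \<bar>eps\<bar>) / n) + Ml * (Mb / n)"
  proof (intro add_mono mult_mono)
    have "\<bar>lam ?x - lam 0\<bar> \<le> Ll * \<bar>?x - 0\<bar>" by (rule lipc(2)[OF lipb_lam x zero_K])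
    also have "\<dots> \<le> Ll * ((real k + 1) * (1 + \<bar>eps\<bar>) / n)"
      using xx_abs[OF g] lipc(1)[OF lipb_lam] by (intro mult_left_mono) auto
    finally show "\<bar>lam ?x - \<Lambda>\<bar> \<le> Ll * ((real k + 1) * (1 + \<bar>eps\<bar>) / n)" .
    show "\<bar>lam ?x\<bar> \<le> Ml" by (rule bnd(2)[OF lipb_lam x])
    show "\<bar>beta ?x / n\<bar> \<le> Mb / n" by (rule beta_small(1)[OF g k])
  qed (auto simp: bnd(1)[OF lipb_lam])
  also have "\<dots> \<le> Ll * ((real k + 1) * (1 + \<bar>eps\<bar>) / n) + Ml * (Mb * (real k + 1) / n)"
    using n bnd(1)[OF lipb_lam] Mb0
    by (intro add_left_mono mult_left_mono divide_right_mono) (auto simp: mult_le_cancel_left1)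
  also have "\<dots> = (Ll * (1 + \<bar>eps\<bar>) + Ml * Mb) * (real k + 1) / n" using n by (simp add: field_simps)
  finally show ?thesis .
qed

end

lemma abs3: "\<bar>a + b + c\<bar> \<le> \<bar>a\<bar> + \<bar>b\<bar> + \<bar>(c::real)\<bar>"
  using abs_triangle_ineq[of "a+b" c] abs_triangle_ineq[of a b] by linarith

lemma aux_rearr: "t * (A * (B * c / m)) = A * B * (c * t) / (m::real)" by (simp add: algebra_simps)

context setting begin

lemma resid:
  assumes g: "good eps n" and k: "Suc k < n"
  shows "\<bar>ww eps n (Suc k) - dd eps n (Suc k) + 1 / ww eps n k\<bar>
     \<le> (Lpb + Lpp + 2 * Mb^2) / (real n)^2
       + (1 + 2 * Ml) * (Ll * (1 + \<bar>eps\<bar>) + Ml * Mb) * ((real (Suc k) + 1) * \<theta> ^ Suc k) / n"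
proof -
  have kn: "k < n" using k by simp
  define X where "X = xx eps n (Suc k)"
  define Y where "Y = xx eps n k"
  have XK: "X \<in> K" using good_facts(2)[OF g k] X_def by simp
  have YK: "Y \<in> K" using good_facts(2)[OF g kn] Y_def by simp
  have n: "real n > 0" using good_facts(1)[OF g] by simp
  have XY: "Y - X = - (1 / n)" unfolding X_def Y_def xx_def using n by (simp add: field_simps)
  define lX where "lX = lam X"
  define lY where "lY = lam Y"
  define bX where "bX = beta X"
  define bY where "bY = beta Y"
  define pX where "pX = 1 + bX / n"
  define pY where "pY = 1 + bY / n"
  define A0 where "A0 = Aq \<theta> k"
  define A1 where "A1 = Aq \<theta> (Suc k)"
  have lX1: "lX \<ge> 1" using lam_ge1[OF XK] lX_def by simp
  have lY1: "lY \<ge> 1" using lam_ge1[OF YK] lY_def by simp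
  have pX2: "pX \<ge> 1/2" using beta_small(3)[OF g k] unfolding pX_def bX_def X_def .
  have pY2: "pY \<ge> 1/2" using beta_small(3)[OF g kn] unfolding pY_def bY_def Y_def .
  have A00: "A0 \<ge> 0" using Aq_nonneg[OF theta] A0_def by simp
  have A10: "A1 \<ge> 0" using Aq_nonneg[OF theta] A1_def by simp
  have rec: "1 / (1 + A0) = 1 - A1 * \<Lambda>^2"
    using Aq_rec[OF theta, of k] unfolding A0_def A1_def by simp
  have Lam1: "\<Lambda> \<ge> 1" using lam_ge1[OF zero_K] .
  have ddS: "dd eps n (Suc k) = lX + 1 / lX" using dd_eq[OF g k] X_def lX_def by simp
  have wS: "ww eps n (Suc k) = lX * (1 + A1) * pX" unfolding ww_def lX_def X_def A1_def pX_def bX_def by simp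
  have wk: "1 / ww eps n k = (1 - A1 * \<Lambda>^2) / (lY * pY)"
  proof -
    have "ww eps n k = lY * (1 + A0) * pY" unfolding ww_def lY_def Y_def A0_def pY_def bY_def by simp
    hence "1 / ww eps n k = (1 / (1 + A0)) / (lY * pY)" by simp
    thus ?thesis using rec by simp
  qed
  define T where "T = psi Y - psi X + psi' X / n"
  define R0 where "R0 = (psi X * bX - psi Y * bY) / n + T + psi Y * bY^2 / ((real n)^2 * pY)"
  define Br where "Br = lX * pX - \<Lambda>^2 / (lY * pY)"
  have pp: "psi' X = lX * bX - bX / lX"
    using beta_ident[OF XK] unfolding psi_def lX_def bX_def by (simp add: algebra_simps)
  have Rid: "ww eps n (Suc k) - dd eps n (Suc k) + 1 / ww eps n k = R0 + A1 * Br"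
  proof -
    have nz: "lX \<noteq> 0" "lY \<noteq> 0" "pY \<noteq> 0" "real n \<noteq> 0" using lX1 lY1 pY2 n by auto
    have bXe: "bX = (pX - 1) * n" and bYe: "bY = (pY - 1) * n" unfolding pX_def pY_def using n by simp_all
    have "ww eps n (Suc k) - dd eps n (Suc k) + 1 / ww eps n k
        = lX * (1 + A1) * pX - (lX + 1 / lX) + (1 - A1 * \<Lambda>^2) / (lY * pY)"
      unfolding wS ddS wk ..
    also have "\<dots> = R0 + A1 * Br"
      unfolding R0_def T_def Br_def pp psi_def lX_def[symmetric] lY_def[symmetric] bXe bYe
      using nz by (simp add: field_simps power2_eq_square)
    finally show ?thesis .
  qed
  have Tb: "\<bar>T\<bar> \<le> Lpp / (real n)^2"
  proof -
    have "\<bar>psi Y - psi X - psi' X * (Y - X)\<bar> \<le> Lpp * (Y - X)^2"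
      by (rule taylor1[OF dpsi lipc(2)[OF lipb_psi'] XK YK])
    moreover have "psi Y - psi X - psi' X * (Y - X) = T" unfolding T_def XY by simp
    moreover have "Lpp * (Y - X)^2 = Lpp / (real n)^2" unfolding XY by (simp add: power2_eq_square)
    ultimately show ?thesis by simp
  qed
  have Pb: "\<bar>(psi X * bX - psi Y * bY) / n\<bar> \<le> Lpb / (real n)^2"
  proof -
    have "\<bar>psi X * bX - psi Y * bY\<bar> \<le> Lpb * \<bar>X - Y\<bar>"
      using lipc(2)[OF lipb_psibeta XK YK] unfolding bX_def bY_def .
    also have "\<bar>X - Y\<bar> = 1 / n"
    proof -
      have "X - Y = 1 / n" using XY by linarith
      thus ?thesis using n by simp
    qed
    finally have "\<bar>psi X * bX - psi Y * bY\<bar> \<le> Lpb / n" by simp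
    hence "\<bar>psi X * bX - psi Y * bY\<bar> / n \<le> (Lpb / n) / n" using n by (intro divide_right_mono) auto
    thus ?thesis by (simp add: power2_eq_square)
  qed
  have Qb: "\<bar>psi Y * bY^2 / ((real n)^2 * pY)\<bar> \<le> 2 * Mb^2 / (real n)^2"
  proof -
    have ps: "0 < psi Y" "psi Y \<le> 1" unfolding psi_def using lY1 lY_def by auto
    have "\<bar>bY\<bar>^2 \<le> Mb^2" using bnd(2)[OF lipb_beta YK] unfolding bY_def
      by (intro power_mono) auto
    hence "bY^2 \<le> Mb^2" by simp
    hence "psi Y * bY^2 \<le> 1 * Mb^2" using ps by (intro mult_mono) auto
    hence "psi Y * bY^2 / pY \<le> Mb^2 / (1/2)" using pY2 ps Mb0
      by (intro frac_le) auto
    hence "psi Y * bY^2 / pY / (real n)^2 \<le> (2 * Mb^2) / (real n)^2" using n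
      by (intro divide_right_mono) auto
    moreover have "psi Y * bY^2 / ((real n)^2 * pY) \<ge> 0" using ps pY2 by auto
    ultimately show ?thesis by (simp add: field_simps)
  qed
  have R0b: "\<bar>R0\<bar> \<le> (Lpb + Lpp + 2 * Mb^2) / (real n)^2"
  proof -
    have "\<bar>R0\<bar> \<le> \<bar>(psi X * bX - psi Y * bY) / n\<bar> + \<bar>T\<bar> + \<bar>psi Y * bY^2 / ((real n)^2 * pY)\<bar>"
      unfolding R0_def by (rule abs3)
    also have "\<dots> \<le> Lpb / (real n)^2 + Lpp / (real n)^2 + 2 * Mb^2 / (real n)^2"
      using Pb Tb Qb by linarith
    finally show ?thesis by (simp add: add_divide_distrib)
  qed
  define C where "C = Ll * (1 + \<bar>eps\<bar>) + Ml * Mb"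
  have C0: "C \<ge> 0" unfolding C_def using lipc(1)[OF lipb_lam] bnd(1)[OF lipb_lam] Mb0 by simp
  have nX: "\<bar>lX * pX - \<Lambda>\<bar> \<le> C * (real (Suc k) + 1) / n"
    using lamp_near[OF g k] unfolding C_def lX_def pX_def bX_def X_def .
  have nY: "\<bar>lY * pY - \<Lambda>\<bar> \<le> C * (real (Suc k) + 1) / n"
  proof -
    have "\<bar>lY * pY - \<Lambda>\<bar> \<le> C * (real k + 1) / n"
      using lamp_near[OF g kn] unfolding C_def lY_def pY_def bY_def Y_def .
    also have "\<dots> \<le> C * (real (Suc k) + 1) / n" using C0 n
      by (intro divide_right_mono mult_left_mono) auto
    finally show ?thesis .
  qed
  have Brb: "\<bar>Br\<bar> \<le> (1 + 2 * Ml) * (C * (real (Suc k) + 1) / n)"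
  proof -
    have "1 * (1/2) \<le> lY * pY" by (rule mult_mono) (use lY1 pY2 in auto)
    hence lp: "lY * pY \<ge> 1/2" by simp
    have "Br = (lX * pX - \<Lambda>) + \<Lambda> * (lY * pY - \<Lambda>) / (lY * pY)"
    proof -
      have "lY \<noteq> 0" "pY \<noteq> 0" using lY1 pY2 by auto
      thus ?thesis unfolding Br_def by (simp add: field_simps power2_eq_square)
    qed
    hence t: "\<bar>Br\<bar> \<le> \<bar>lX * pX - \<Lambda>\<bar> + \<bar>\<Lambda> * (lY * pY - \<Lambda>) / (lY * pY)\<bar>"
      using abs_triangle_ineq by metis
    have e: "\<bar>\<Lambda> * (lY * pY - \<Lambda>) / (lY * pY)\<bar> = \<bar>\<Lambda>\<bar> * \<bar>lY * pY - \<Lambda>\<bar> / \<bar>lY * pY\<bar>"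
      by (simp only: abs_mult abs_divide)
    have q: "\<bar>\<Lambda>\<bar> * \<bar>lY * pY - \<Lambda>\<bar> / \<bar>lY * pY\<bar> \<le> Ml * (C * (real (Suc k) + 1) / n) / (1/2)"
    proof (intro frac_le mult_mono nY)
      show "\<bar>\<Lambda>\<bar> \<le> Ml" by (rule bnd(2)[OF lipb_lam zero_K])
      show "1/2 \<le> \<bar>lY * pY\<bar>" using lp by simp
    qed (use C0 n bnd(1)[OF lipb_lam] in auto)
    have "\<bar>Br\<bar> \<le> C * (real (Suc k) + 1) / n + Ml * (C * (real (Suc k) + 1) / n) / (1/2)"
      using t e q nX by linarith
    also have "\<dots> = (1 + 2 * Ml) * (C * (real (Suc k) + 1) / n)" by (simp add: algebra_simps add_divide_distrib[symmetric])
    finally show ?thesis .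
  qed
  have A1b: "A1 \<le> \<theta> ^ Suc k"
  proof -
    have "A1 \<le> \<theta> ^ Suc (Suc k)" unfolding A1_def by (rule Aq_le[OF theta])
    also have "\<dots> \<le> \<theta> ^ Suc k" using theta by (intro power_decreasing) auto
    finally show ?thesis .
  qed
  have t: "\<bar>R0 + A1 * Br\<bar> \<le> \<bar>R0\<bar> + \<bar>A1 * Br\<bar>" by (rule abs_triangle_ineq)
  have e: "\<bar>A1 * Br\<bar> = A1 * \<bar>Br\<bar>" using A10 by (simp add: abs_mult)
  have q: "A1 * \<bar>Br\<bar> \<le> \<theta> ^ Suc k * ((1 + 2 * Ml) * (C * (real (Suc k) + 1) / n))"
    using Brb A1b A10 by (intro mult_mono) auto
  have "\<bar>R0 + A1 * Br\<bar> \<le> (Lpb + Lpp + 2 * Mb^2) / (real n)^2 + \<theta> ^ Suc k * ((1 + 2 * Ml) * (C * (real (Suc k) + 1) / n))"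
    using t e q R0b by linarith
  also have "\<dots> = (Lpb + Lpp + 2 * Mb^2) / (real n)^2
       + (1 + 2 * Ml) * C * ((real (Suc k) + 1) * \<theta> ^ Suc k) / n" by (simp only: aux_rearr)
  finally show ?thesis unfolding Rid C_def .
qed

end

context setting begin

lemma Aq0: "Aq \<theta> 0 = \<theta>"
  using theta unfolding Aq_def by simp

lemma e0_bound: assumes g: "good eps n"
  shows "\<bar>U (dd eps n) 0 - ww eps n 0\<bar> \<le> (2 * Ll * \<bar>eps\<bar> + 2 * Ml * Mb) / n"
proof -
  have n: "real n > 0" using good_facts(1)[OF g] by simp
  have n0: "0 < n" using good_facts(1)[OF g] .
  define x where "x = xx eps n 0"
  have xK: "x \<in> K" unfolding x_def using good_facts(2)[OF g n0] .
  define l where "l = lam x"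
  define b where "b = beta x"
  have l1: "l \<ge> 1" unfolding l_def using lam_ge1[OF xK] .
  have L1: "\<Lambda> \<ge> 1" using lam_ge1[OF zero_K] .
  have U0: "U (dd eps n) 0 = l + 1 / l" using dd_eq[OF g n0] unfolding l_def x_def by simp
  have w0: "ww eps n 0 = l * (1 + \<theta>) * (1 + b / n)" unfolding ww_def Aq0 l_def b_def x_def by simp
  have eq: "U (dd eps n) 0 - ww eps n 0 = (\<Lambda> - l) * ((\<Lambda> + l) / (l * \<Lambda>^2)) - l * (1 + \<theta>) * (b / n)"
    unfolding U0 w0 using l1 L1 n by (simp add: field_simps power2_eq_square)
  have f1: "(\<Lambda> + l) / (l * \<Lambda>^2) \<le> 2"
  proof -
    have "(\<Lambda> + l) / (l * \<Lambda>^2) = 1 / (l * \<Lambda>) + 1 / \<Lambda>^2" using l1 L1 by (simp add: field_simps power2_eq_square)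
    moreover have "1 * 1 \<le> l * \<Lambda>" using l1 L1 by (intro mult_mono) auto
    hence "1 / (l * \<Lambda>) \<le> 1" by simp
    moreover have "1 / \<Lambda>^2 \<le> 1" using L1 by (simp add: one_le_power)
    ultimately show ?thesis by linarith
  qed
  have f0: "(\<Lambda> + l) / (l * \<Lambda>^2) \<ge> 0" using l1 L1 by simp
  have dl: "\<bar>\<Lambda> - l\<bar> \<le> Ll * \<bar>eps\<bar> / n"
  proof -
    have "\<bar>lam 0 - lam x\<bar> \<le> Ll * \<bar>0 - x\<bar>" by (rule lipc(2)[OF lipb_lam zero_K xK])
    also have "\<bar>0 - x\<bar> = \<bar>eps\<bar> / n" unfolding x_def xx_def using n by simp
    finally show ?thesis unfolding l_def by simp
  qed
  have t1: "\<bar>(\<Lambda> - l) * ((\<Lambda> + l) / (l * \<Lambda>^2))\<bar> \<le> (Ll * \<bar>eps\<bar> / n) * 2"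
    unfolding abs_mult using dl f1 f0 by (intro mult_mono) auto
  have t2: "\<bar>l * (1 + \<theta>) * (b / n)\<bar> \<le> Ml * 2 * (Mb / n)"
  proof -
    have "\<bar>l * (1 + \<theta>) * (b / n)\<bar> = \<bar>l\<bar> * \<bar>1 + \<theta>\<bar> * \<bar>b / n\<bar>" by (simp only: abs_mult)
    also have "\<dots> \<le> Ml * 2 * (Mb / n)"
    proof (intro mult_mono)
      show "\<bar>l\<bar> \<le> Ml" unfolding l_def by (rule bnd(2)[OF lipb_lam xK])
      show "\<bar>1 + \<theta>\<bar> \<le> 2" using theta by simp
      show "\<bar>b / n\<bar> \<le> Mb / n" unfolding b_def x_def by (rule beta_small(1)[OF g n0])
    qed (use bnd(1)[OF lipb_lam] in auto)
    finally show ?thesis .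
  qed
  have "\<bar>U (dd eps n) 0 - ww eps n 0\<bar> \<le> (Ll * \<bar>eps\<bar> / n) * 2 + Ml * 2 * (Mb / n)"
    unfolding eq by (rule order_trans[OF abs_triangle_ineq4 add_mono[OF t1 t2]])
  also have "\<dots> = (2 * Ll * \<bar>eps\<bar> + 2 * Ml * Mb) / n" using n by (simp add: field_simps)
  finally show ?thesis .
qed

abbreviation "nu \<equiv> (1 + mu) / 2"

lemma nu: "nu > 1" "nu \<le> mu" using mu by auto

lemma e_step: assumes g: "good eps n" and k: "Suc k < n"
  shows "\<bar>U (dd eps n) (Suc k) - ww eps n (Suc k)\<bar>
    \<le> (1 / nu^2) * \<bar>U (dd eps n) k - ww eps n k\<bar> + \<bar>ww eps n (Suc k) - dd eps n (Suc k) + 1 / ww eps n k\<bar>"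
proof -
  have kn: "k < n" using k by simp
  define u where "u = U (dd eps n) k"
  define w where "w = ww eps n k"
  have u: "u \<ge> nu" using U_ge[OF g kn] nu unfolding u_def by linarith
  have w: "w \<ge> nu" using ww_ge[OF g kn] unfolding w_def by simp
  have pos: "u > 0" "w > 0" using u w nu by auto
  have eq: "U (dd eps n) (Suc k) - ww eps n (Suc k)
     = (u - w) / (u * w) - (ww eps n (Suc k) - dd eps n (Suc k) + 1 / ww eps n k)"
    unfolding u_def[symmetric] w_def[symmetric] U.simps(2) using pos by (simp add: field_simps)
  have "\<bar>(u - w) / (u * w)\<bar> = \<bar>u - w\<bar> / (u * w)" using pos by (simp add: abs_divide)
  also have "\<dots> \<le> \<bar>u - w\<bar> / nu^2"
  proof (rule divide_left_mono)
    show "nu^2 \<le> u * w" unfolding power2_eq_square using u w nu by (intro mult_mono) auto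
  qed (use pos nu in \<open>auto intro!: mult_pos_pos\<close>)
  finally have "\<bar>(u - w) / (u * w)\<bar> \<le> (1 / nu^2) * \<bar>u - w\<bar>" by simp
  thus ?thesis unfolding eq u_def w_def
    by (rule order_trans[OF abs_triangle_ineq4 add_mono[OF _ order_refl]])
qed

end

lemma aux2: "c / n + d / n * (1 / t) = (c + d / t) / (n::real)"
  by (simp add: add_divide_distrib)

context setting begin

definition "CF eps = (2 * Ll * \<bar>eps\<bar> + 2 * Ml * Mb + (Lpb + Lpp + 2 * Mb^2)
   + (1 + 2 * Ml) * (Ll * (1 + \<bar>eps\<bar>) + Ml * Mb) / (1 - \<theta>)^2) / (1 - 1 / nu^2)"

lemma main_est: assumes g: "good eps n"
  shows "\<bar>(\<Sum>k<n. ln (U (dd eps n) k)) - (\<Sum>k<n. ln (ww eps n k))\<bar> \<le> CF eps / n"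
proof -
  have n0: "0 < n" using good_facts(1)[OF g] .
  have n: "real n > 0" using n0 by simp
  obtain m where m: "n = Suc m" using n0 gr0_implies_Suc by blast
  define E where "E k = \<bar>U (dd eps n) k - ww eps n k\<bar>" for k
  define RR where "RR k = \<bar>ww eps n (Suc k) - dd eps n (Suc k) + 1 / ww eps n k\<bar>" for k
  define R where "R j = RR (j - 1)" for j
  define c where "c = 1 / nu^2"
  define C0 where "C0 = Lpb + Lpp + 2 * Mb^2"
  define C3 where "C3 = (1 + 2 * Ml) * (Ll * (1 + \<bar>eps\<bar>) + Ml * Mb)"
  have C00: "C0 \<ge> 0" unfolding C0_def using lipc(1)[OF lipb_psibeta] lipc(1)[OF lipb_psi'] by simp
  have C30: "C3 \<ge> 0" unfolding C3_def using lipc(1)[OF lipb_lam] bnd(1)[OF lipb_lam] Mb0 by simp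
  have nu2: "1 < nu^2" by (rule one_less_power[OF nu(1)]) simp
  have c: "0 \<le> c" "c < 1" unfolding c_def using nu2 by (auto simp: divide_less_eq)
  have es: "(1 - c) * (\<Sum>k<Suc m. E k) \<le> E 0 + (\<Sum>k<m. R (Suc k))"
  proof (rule err_sum)
    fix k assume "Suc k < Suc m"
    hence k: "Suc k < n" using m by simp
    show "E (Suc k) \<le> c * E k + R (Suc k)" unfolding E_def R_def RR_def c_def
      using e_step[OF g k] by simp
  qed (use c in \<open>auto simp: E_def\<close>)
  have RRb: "RR k \<le> C0 / (real n)^2 + C3 * ((real (Suc k) + 1) * \<theta> ^ Suc k) / n" if "k < m" for k
    unfolding RR_def C0_def C3_def using resid[OF g] that m by simp
  have sumR: "(\<Sum>k<m. R (Suc k)) \<le> (C0 + C3 / (1 - \<theta>)^2) / n"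
  proof -
    have "(\<Sum>k<m. R (Suc k)) = (\<Sum>k<m. RR k)" unfolding R_def by simp
    also have "\<dots> \<le> (\<Sum>k<m. C0 / (real n)^2 + C3 * ((real (Suc k) + 1) * \<theta> ^ Suc k) / n)"
      by (rule sum_mono) (rule RRb, simp)
    also have "\<dots> = real m * (C0 / (real n)^2) + C3 / n * (\<Sum>k<m. (real (Suc k) + 1) * \<theta> ^ Suc k)"
      by (simp add: sum.distrib sum_distrib_left sum_divide_distrib ac_simps)
    also have "\<dots> \<le> C0 / n + C3 / n * (1 / (1 - \<theta>)^2)"
    proof (rule add_mono)
      have "real m * (C0 / (real n)^2) \<le> real n * (C0 / (real n)^2)" using m C00 n
        by (intro mult_right_mono) auto
      also have "\<dots> = C0 / n" using n by (simp add: power2_eq_square)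
      finally show "real m * (C0 / (real n)^2) \<le> C0 / n" .
      have "(\<Sum>k<m. (real (Suc k) + 1) * \<theta> ^ Suc k) \<le> (\<Sum>k<Suc m. (real k + 1) * \<theta> ^ k)"
        unfolding sum.lessThan_Suc_shift[of "\<lambda>k. (real k + 1) * \<theta> ^ k" m] by simp
      also have "\<dots> \<le> 1 / (1 - \<theta>)^2" using theta by (intro sum_kpow) auto
      finally show "C3 / n * (\<Sum>k<m. (real (Suc k) + 1) * \<theta> ^ Suc k) \<le> C3 / n * (1 / (1 - \<theta>)^2)"
        using C30 n by (intro mult_left_mono) auto
    qed
    also have "\<dots> = (C0 + C3 / (1 - \<theta>)^2) / n" by (rule aux2)
    finally show ?thesis .
  qed
  have E0: "E 0 \<le> (2 * Ll * \<bar>eps\<bar> + 2 * Ml * Mb) / n" unfolding E_def by (rule e0_bound[OF g])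
  have sumE: "(\<Sum>k<n. E k) \<le> CF eps / n"
  proof -
    define S where "S = 2 * Ll * \<bar>eps\<bar> + 2 * Ml * Mb + (C0 + C3 / (1 - \<theta>)^2)"
    have CFe: "CF eps = S / (1 - c)" unfolding CF_def S_def C0_def C3_def c_def by (simp add: add.assoc)
    have "(1 - c) * (\<Sum>k<n. E k) \<le> (2 * Ll * \<bar>eps\<bar> + 2 * Ml * Mb) / n + (C0 + C3 / (1 - \<theta>)^2) / n"
      using es E0 sumR m by simp
    also have "\<dots> = S / n" unfolding S_def by (simp add: add_divide_distrib)
    finally have "(1 - c) * (\<Sum>k<n. E k) \<le> S / n" .
    moreover have c1: "0 < 1 - c" using c by simp
    ultimately have "(\<Sum>k<n. E k) \<le> (S / n) / (1 - c)"
      by (subst pos_le_divide_eq[OF c1]) (simp add: mult.commute)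
    thus ?thesis unfolding CFe by (simp add: mult.commute)
  qed
  have "\<bar>(\<Sum>k<n. ln (U (dd eps n) k)) - (\<Sum>k<n. ln (ww eps n k))\<bar> = \<bar>\<Sum>k<n. ln (U (dd eps n) k) - ln (ww eps n k)\<bar>"
    by (simp add: sum_subtractf)
  also have "\<dots> \<le> (\<Sum>k<n. \<bar>ln (U (dd eps n) k) - ln (ww eps n k)\<bar>)" by (rule sum_abs)
  also have "\<dots> \<le> (\<Sum>k<n. E k)" unfolding E_def
  proof (rule sum_mono, rule ln_diff_le)
    fix k assume "k \<in> {..<n}"
    hence k: "k < n" by simp
    show "1 \<le> U (dd eps n) k" using U_ge[OF g k] mu by simp
    show "1 \<le> ww eps n k" using ww_ge[OF g k] mu by simp
  qed
  also have "\<dots> \<le> CF eps / n" by (rule sumE)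
  finally show ?thesis .
qed

end

lemma tend_bound:
  fixes a b :: "nat \<Rightarrow> real"
  assumes "\<And>n. n \<ge> N \<Longrightarrow> \<bar>a n - l\<bar> \<le> b n" "b \<longlonglongrightarrow> 0"
  shows "a \<longlonglongrightarrow> l"
proof -
  have "(\<lambda>n. a n - l) \<longlonglongrightarrow> 0"
    by (rule Lim_null_comparison[OF _ assms(2)]) (use assms(1) in \<open>auto simp: eventually_sequentially\<close>)
  thus ?thesis by (simp add: LIM_zero_iff)
qed

lemma abs_tri2: "\<bar>A - B\<bar> \<le> x \<Longrightarrow> \<bar>B - C\<bar> \<le> y \<Longrightarrow> \<bar>A - C\<bar> \<le> x + (y::real)"
  by linarith

lemma geo_lim: assumes "0 < (q::real)" "q < 1"
  shows "(\<lambda>n. ln ((1 - q ^ Suc n) / (1 - q))) \<longlonglongrightarrow> ln (1 / (1 - q))"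
proof -
  have p: "(\<lambda>n. q ^ n) \<longlonglongrightarrow> 0" using assms by (intro LIMSEQ_power_zero) auto
  have p2: "(\<lambda>n. q ^ Suc n) \<longlonglongrightarrow> 0" using LIMSEQ_Suc[OF p] .
  have "(\<lambda>n. (1 - q ^ Suc n) / (1 - q)) \<longlonglongrightarrow> (1 - 0) / (1 - q)"
    using assms by (intro tendsto_intros p2) auto
  hence "(\<lambda>n. ln ((1 - q ^ Suc n) / (1 - q))) \<longlonglongrightarrow> ln ((1 - 0) / (1 - q))"
    using assms by (intro tendsto_ln) auto
  thus ?thesis by simp
qed

context setting begin

lemma S2_eq: "(\<Sum>k<n. ln (1 + Aq \<theta> k)) = ln ((1 - \<theta> ^ Suc n) / (1 - \<theta>))"
proof -
  have "(\<Sum>k<n. ln (1 + Aq \<theta> k)) = ln (\<Prod>k<n. 1 + Aq \<theta> k)"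
    using Aq_nonneg[OF theta] by (subst ln_prod) (auto simp: add_nonneg_eq_0_iff)
  also have "\<dots> = ln ((1 - \<theta> ^ Suc n) / (1 - \<theta>))" by (simp add: Aq_prod[OF theta])
  finally show ?thesis .
qed

lemma T2: "(\<lambda>n. \<Sum>k<n. ln (1 + Aq \<theta> k)) \<longlonglongrightarrow> ln (1 / (1 - \<theta>))"
  unfolding S2_eq using theta by (rule geo_lim)

lemma T3: "(\<lambda>n. \<Sum>k<n. ln (1 + beta (xx eps n k) / n)) \<longlonglongrightarrow> h 1 - h 0"
proof -
  obtain N where N: "\<And>n. n \<ge> N \<Longrightarrow> good eps n" using good_eventually by blast
  define Lb where "Lb = lipc beta"
  have Lb0: "Lb \<ge> 0" unfolding Lb_def by (rule lipc(1)[OF lipb_beta])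
  show ?thesis
  proof (rule tend_bound[of N])
    fix n assume "n \<ge> N"
    hence g: "good eps n" by (rule N)
    have n: "real n > 0" using good_facts(1)[OF g] by simp
    have A: "\<bar>(\<Sum>k<n. ln (1 + beta (xx eps n k) / n)) - (\<Sum>k<n. beta (xx eps n k) / n)\<bar> \<le> 2 * Mb^2 / n"
    proof -
      have "\<bar>(\<Sum>k<n. ln (1 + beta (xx eps n k) / n)) - (\<Sum>k<n. beta (xx eps n k) / n)\<bar>
          = \<bar>\<Sum>k<n. ln (1 + beta (xx eps n k) / n) - beta (xx eps n k) / n\<bar>" by (simp add: sum_subtractf)
      also have "\<dots> \<le> (\<Sum>k<n. \<bar>ln (1 + beta (xx eps n k) / n) - beta (xx eps n k) / n\<bar>)" by (rule sum_abs)
      also have "\<dots> \<le> (\<Sum>k<n. 2 * (Mb / n)^2)"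
      proof (rule sum_mono)
        fix k assume "k \<in> {..<n}"
        hence k: "k < n" by simp
        have "\<bar>ln (1 + beta (xx eps n k) / n) - beta (xx eps n k) / n\<bar> \<le> 2 * (beta (xx eps n k) / n)^2"
          by (rule abs_ln_one_plus_x_minus_x_bound[OF beta_small(2)[OF g k]])
        also have "\<dots> \<le> 2 * (Mb / n)^2"
        proof -
          have "\<bar>beta (xx eps n k) / n\<bar>^2 \<le> (Mb / n)^2"
            using beta_small(1)[OF g k] by (intro power_mono) auto
          hence "(beta (xx eps n k) / n)^2 \<le> (Mb / n)^2" by (simp only: power2_abs)
          thus ?thesis by simp
        qed
        finally show "\<bar>ln (1 + beta (xx eps n k) / n) - beta (xx eps n k) / n\<bar> \<le> 2 * (Mb / n)^2" .
      qed
      also have "\<dots> = 2 * Mb^2 / n" using n by (simp add: power2_eq_square)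
      finally show ?thesis .
    qed
    have B: "\<bar>(\<Sum>k<n. beta (xx eps n k) / n) - (h 1 - h 0)\<bar> \<le> 2 * Lb * ((\<bar>eps\<bar>+1)/n)"
    proof -
      have "\<bar>(\<Sum>k<n. beta ((real k + eps) / n)) / n - (h 1 - h 0)\<bar> \<le> 2 * Lb * ((\<bar>eps\<bar>+1)/n)"
        unfolding Lb_def
        by (rule riemann1[OF good_facts(1)[OF g] good_facts(3)[OF g] dh lipc(2)[OF lipb_beta] lipc(1)[OF lipb_beta]])
      thus ?thesis unfolding xx_def by (simp add: sum_divide_distrib)
    qed
    have "\<bar>(\<Sum>k<n. ln (1 + beta (xx eps n k) / n)) - (h 1 - h 0)\<bar> \<le> 2 * Mb^2 / n + 2 * Lb * ((\<bar>eps\<bar>+1)/n)"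
      using A B by linarith
    also have "\<dots> = (2 * Mb^2 + 2 * Lb * (\<bar>eps\<bar>+1)) / n" using n by (simp add: field_simps)
    finally show "\<bar>(\<Sum>k<n. ln (1 + beta (xx eps n k) / n)) - (h 1 - h 0)\<bar> \<le> (2 * Mb^2 + 2 * Lb * (\<bar>eps\<bar>+1)) / n" .
  qed (rule lim_const_over_n)
qed

definition "Gint x = integral {a..x} g"

lemma cont_g: "continuous_on K g" using dg by (rule DERIV_continuous_on)

lemma dGint: "x \<in> K \<Longrightarrow> (Gint has_real_derivative g x) (at x within K)"
  unfolding Gint_def[abs_def] by (rule integral_has_real_derivative[OF cont_g])

lemma int_g: "integral {0..1} g = Gint 1 - Gint 0"
proof -
  have "continuous_on {a..1} g" using cont_g by (rule continuous_on_subset) (use b1 in auto)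
  hence "g integrable_on {a..1}" by (rule integrable_continuous_interval)
  hence "integral {a..0} g + integral {0..1} g = integral {a..1} g"
    using a0 by (intro Henstock_Kurzweil_Integration.integral_combine) auto
  thus ?thesis unfolding Gint_def by simp
qed

lemma T4: "(\<lambda>n. (\<Sum>k<n. g (xx eps n k)) - n * integral {0..1} g) \<longlonglongrightarrow> (eps - 1/2) * (g 1 - g 0)"
proof -
  obtain N where N: "\<And>n. n \<ge> N \<Longrightarrow> good eps n" using good_eventually by blast
  define Lg where "Lg = lipc g'"
  have Lg0: "Lg \<ge> 0" unfolding Lg_def by (rule lipc(1)[OF lipb_g'])
  show ?thesis
  proof (rule tend_bound[of N])
    fix n assume "n \<ge> N"
    hence g: "good eps n" by (rule N)
    have n: "real n > 0" using good_facts(1)[OF g] by simp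
    define r where "r = (\<bar>eps\<bar>+1)/n"
    have A: "\<bar>(\<Sum>k<n. g (xx eps n k)) - n * integral {0..1} g - (eps - 1/2) * ((\<Sum>k<n. g' (xx eps n k)) / n)\<bar>
       \<le> 4 * Lg * r^2 * n"
      using riemann2[OF good_facts(1)[OF g] good_facts(3)[OF g] dGint dg lipc(2)[OF lipb_g'] lipc(1)[OF lipb_g']]
      unfolding int_g xx_def r_def Lg_def .
    have B: "\<bar>(\<Sum>k<n. g' (xx eps n k)) / n - (g 1 - g 0)\<bar> \<le> 2 * Lg * r"
      using riemann1[OF good_facts(1)[OF g] good_facts(3)[OF g] dg lipc(2)[OF lipb_g'] lipc(1)[OF lipb_g']]
      unfolding xx_def r_def Lg_def .
    have B': "\<bar>(eps - 1/2) * ((\<Sum>k<n. g' (xx eps n k)) / n) - (eps - 1/2) * (g 1 - g 0)\<bar> \<le> \<bar>eps - 1/2\<bar> * (2 * Lg * r)"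
    proof -
      define Xs where "Xs = (\<Sum>k<n. g' (xx eps n k)) / n"
      have "\<bar>(eps - 1/2) * Xs - (eps - 1/2) * (g 1 - g 0)\<bar> = \<bar>eps - 1/2\<bar> * \<bar>Xs - (g 1 - g 0)\<bar>"
        by (simp only: right_diff_distrib[symmetric] abs_mult)
      also have "\<dots> \<le> \<bar>eps - 1/2\<bar> * (2 * Lg * r)" using B unfolding Xs_def[symmetric]
        by (intro mult_left_mono) auto
      finally show ?thesis unfolding Xs_def .
    qed
    have "\<bar>(\<Sum>k<n. g (xx eps n k)) - n * integral {0..1} g - (eps - 1/2) * (g 1 - g 0)\<bar>
       \<le> 4 * Lg * r^2 * n + \<bar>eps - 1/2\<bar> * (2 * Lg * r)"
      by (rule abs_tri2[OF A B'])
    also have "\<dots> = (4 * Lg * (\<bar>eps\<bar>+1)^2 + \<bar>eps - 1/2\<bar> * 2 * Lg * (\<bar>eps\<bar>+1)) / n"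
      unfolding r_def using n by (simp add: field_simps power2_eq_square)
    finally show "\<bar>(\<Sum>k<n. g (xx eps n k)) - n * integral {0..1} g - (eps - 1/2) * (g 1 - g 0)\<bar>
       \<le> (4 * Lg * (\<bar>eps\<bar>+1)^2 + \<bar>eps - 1/2\<bar> * 2 * Lg * (\<bar>eps\<bar>+1)) / n" .
  qed (rule lim_const_over_n)
qed

lemma T1: "(\<lambda>n. (\<Sum>k<n. ln (U (dd eps n) k)) - (\<Sum>k<n. ln (ww eps n k))) \<longlonglongrightarrow> 0"
proof -
  obtain N where N: "\<And>n. n \<ge> N \<Longrightarrow> good eps n" using good_eventually by blast
  show ?thesis
    by (rule tend_bound[of N, OF _ lim_const_over_n[of "CF eps"]]) (use main_est N in auto)
qed

end

context setting begin

lemma ln_ww: assumes g: "good eps n" and k: "k < n"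
  shows "ln (ww eps n k) = g (xx eps n k) + ln (1 + Aq \<theta> k) + ln (1 + beta (xx eps n k) / n)"
proof -
  have x: "xx eps n k \<in> K" using good_facts(2)[OF g k] .
  have p1: "lam (xx eps n k) > 0" using lam_pos[OF x] .
  have p2: "1 + Aq \<theta> k > 0" using Aq_nonneg[OF theta, of k] by simp
  have p3: "1 + beta (xx eps n k) / n > 0" using beta_small(3)[OF g k] by linarith
  show ?thesis unfolding ww_def g_def using p1 p2 p3 by (simp add: ln_mult)
qed

theorem loc_limit:
  "(\<lambda>n. Dr (dd eps n) n / exp (integral {0..1} g) ^ n)
     \<longlonglongrightarrow> exp (ln (1 / (1 - \<theta>)) + (h 1 - h 0) + (eps - 1/2) * (g 1 - g 0))"
proof -
  define S1 where "S1 n = (\<Sum>k<n. ln (U (dd eps n) k)) - (\<Sum>k<n. ln (ww eps n k))" for n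
  define S2 where "S2 n = (\<Sum>k<n. ln (1 + Aq \<theta> k))" for n :: nat
  define S3 where "S3 n = (\<Sum>k<n. ln (1 + beta (xx eps n k) / n))" for n
  define S4 where "S4 n = (\<Sum>k<n. g (xx eps n k)) - n * integral {0..1} g" for n
  have "(\<lambda>n. S1 n + S2 n + S3 n + S4 n) \<longlonglongrightarrow> 0 + ln (1 / (1 - \<theta>)) + (h 1 - h 0) + (eps - 1/2) * (g 1 - g 0)"
    unfolding S1_def S2_def S3_def S4_def by (intro tendsto_add T1 T2 T3 T4)
  hence lim: "(\<lambda>n. exp (S1 n + S2 n + S3 n + S4 n)) \<longlonglongrightarrow> exp (ln (1 / (1 - \<theta>)) + (h 1 - h 0) + (eps - 1/2) * (g 1 - g 0))"
    by (intro tendsto_exp) simp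
  obtain N where N: "\<And>n. n \<ge> N \<Longrightarrow> good eps n" using good_eventually by blast
  have ev: "\<forall>\<^sub>F n in sequentially. exp (S1 n + S2 n + S3 n + S4 n) = Dr (dd eps n) n / exp (integral {0..1} g) ^ n"
    unfolding eventually_sequentially
  proof (intro exI allI impI)
    fix n assume "n \<ge> N"
    hence gd: "good eps n" by (rule N)
    have Upos: "U (dd eps n) k > 0" if "k < n" for k using U_ge[OF gd that] mu by simp
    have Dr: "Dr (dd eps n) n = (\<Prod>k<n. U (dd eps n) k)" by (rule Dr_prod) (use Upos in force)
    have lnDr: "ln (Dr (dd eps n) n) = (\<Sum>k<n. ln (U (dd eps n) k))"
      unfolding Dr by (rule ln_prod) (use Upos in force)+
    have Drpos: "Dr (dd eps n) n > 0" unfolding Dr by (rule prod_pos) (use Upos in force)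
    have lnw: "(\<Sum>k<n. ln (ww eps n k)) = (\<Sum>k<n. g (xx eps n k)) + S2 n + S3 n"
      unfolding S2_def S3_def by (simp add: ln_ww[OF gd] sum.distrib)
    have "S1 n + S2 n + S3 n + S4 n = ln (Dr (dd eps n) n) - n * integral {0..1} g"
      unfolding S1_def S4_def lnDr lnw by simp
    hence "exp (S1 n + S2 n + S3 n + S4 n) = exp (ln (Dr (dd eps n) n)) / exp (n * integral {0..1} g)"
      by (simp add: exp_diff)
    also have "\<dots> = Dr (dd eps n) n / exp (integral {0..1} g) ^ n"
      using Drpos by (simp add: exp_of_nat_mult)
    finally show "exp (S1 n + S2 n + S3 n + S4 n) = Dr (dd eps n) n / exp (integral {0..1} g) ^ n" .
  qed
  show ?thesis by (rule Lim_transform_eventually[OF lim ev])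
qed

end

lemma exp_helper: "exp A * exp B / (2 * exp D) = exp (A + B - ln 2 - (D::real))"
  by (simp add: exp_diff exp_add)

lemma lin_helper: "A - B + ((C - D) / 2 - (A - B) / 2) + (eps - 1 / 2) * (C - A) =
     (1 - eps) * (T + A) + eps * (T + C) - T - (2 * B + 2 * D) / (4::real)"
  by (simp add: field_simps)

context setting begin

lemma final_val:
  "exp (ln (1 / (1 - \<theta>)) + (h 1 - h 0) + (eps - 1/2) * (g 1 - g 0)) =
   ((f 0 + sqrt ((f 0)\<^sup>2 - 4)) powr (1 - eps) * (f 1 + sqrt ((f 1)\<^sup>2 - 4)) powr eps)
     / (2 * root 4 (((f 0)\<^sup>2 - 4) * ((f 1)\<^sup>2 - 4)))"
proof -
  define l0 where "l0 = lam 0"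
  define l1 where "l1 = lam 1"
  define s0 where "s0 = s 0"
  define s1 where "s1 = s 1"
  have l0: "l0 > 0" "l0 \<ge> 1" using lam_pos[OF zero_K] lam_ge1[OF zero_K] l0_def by auto
  have l1: "l1 > 0" using lam_pos[OF one_K] l1_def by auto
  have s0: "s0 > 0" using s_pos[OF zero_K] s0_def by auto
  have s1: "s1 > 0" using s_pos[OF one_K] s1_def by auto
  have f0: "f 0 + sqrt ((f 0)\<^sup>2 - 4) = 2 * l0" unfolding l0_def lam_def s_def by simp
  have f1: "f 1 + sqrt ((f 1)\<^sup>2 - 4) = 2 * l1" unfolding l1_def lam_def s_def by simp
  have q0: "(f 0)\<^sup>2 - 4 = s0^2" using s_sq[OF zero_K] s0_def by simp
  have q1: "(f 1)\<^sup>2 - 4 = s1^2" using s_sq[OF one_K] s1_def by simp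
  have th: "1 / (1 - \<theta>) = l0 / s0"
  proof -
    have m: "l0 - 1 / l0 = s0" using lam_minus_inv[OF zero_K] l0_def s0_def by simp
    hence "l0^2 - 1 = l0 * s0" using l0 by (simp add: field_simps power2_eq_square)
    moreover have "1 - \<theta> = (l0^2 - 1) / l0^2" using l0 unfolding l0_def[symmetric] by (simp add: field_simps)
    ultimately have "1 - \<theta> = s0 / l0" using l0 by (simp add: power2_eq_square)
    thus ?thesis by simp
  qed
  have hh: "h 1 - h 0 = (ln l1 - ln s1) / 2 - (ln l0 - ln s0) / 2"
    unfolding h_def l0_def l1_def s0_def s1_def ..
  have gg: "g 1 - g 0 = ln l1 - ln l0" unfolding g_def l0_def l1_def ..
  have LHS: "exp (ln (1 / (1 - \<theta>)) + (h 1 - h 0) + (eps - 1/2) * (g 1 - g 0))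
     = exp (ln l0 - ln s0 + ((ln l1 - ln s1) / 2 - (ln l0 - ln s0) / 2) + (eps - 1/2) * (ln l1 - ln l0))"
    unfolding th hh gg using l0 s0 by (simp add: ln_div)
  have r4: "root 4 ((s0^2) * (s1^2)) = exp ((2 * ln s0 + 2 * ln s1) / 4)"
  proof -
    have "root 4 ((s0^2) * (s1^2)) = (s0^2 * s1^2) powr (1 / real 4)"
      by (rule root_powr_inverse) (use s0 s1 in auto)
    also have "\<dots> = exp ((1/4) * ln (s0^2 * s1^2))" using s0 s1 by (simp add: powr_def)
    also have "ln (s0^2 * s1^2) = 2 * ln s0 + 2 * ln s1" using s0 s1 by (simp add: ln_mult ln_realpow)
    finally show ?thesis by simp
  qed
  have RHS: "((f 0 + sqrt ((f 0)\<^sup>2 - 4)) powr (1 - eps) * (f 1 + sqrt ((f 1)\<^sup>2 - 4)) powr eps)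
     / (2 * root 4 (((f 0)\<^sup>2 - 4) * ((f 1)\<^sup>2 - 4)))
     = exp ((1 - eps) * (ln 2 + ln l0) + eps * (ln 2 + ln l1) - ln 2 - (2 * ln s0 + 2 * ln s1) / 4)"
  proof -
    have "(2 * l0) powr (1 - eps) = exp ((1 - eps) * (ln 2 + ln l0))" using l0 by (simp add: powr_def ln_mult)
    moreover have "(2 * l1) powr eps = exp (eps * (ln 2 + ln l1))" using l1 by (simp add: powr_def ln_mult)
    ultimately have "((2 * l0) powr (1 - eps) * (2 * l1) powr eps) / (2 * exp ((2 * ln s0 + 2 * ln s1) / 4))
       = exp ((1 - eps) * (ln 2 + ln l0)) * exp (eps * (ln 2 + ln l1)) / (2 * exp ((2 * ln s0 + 2 * ln s1) / 4))"
      by simp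
    also have "\<dots> = exp ((1 - eps) * (ln 2 + ln l0) + eps * (ln 2 + ln l1) - ln 2 - (2 * ln s0 + 2 * ln s1) / 4)"
      by (rule exp_helper)
    finally show ?thesis unfolding f0 f1 unfolding q0 q1 r4 .
  qed
  show ?thesis unfolding LHS RHS by (rule arg_cong[where f=exp]) (rule lin_helper)
qed

end

theorem theorem1p2:
  fixes I :: "real set" and f f' f'' :: "real \<Rightarrow> real" and eps :: real
  assumes I_open: "open I" and I_interval: "is_interval I" and I_cont: "{0..1} \<subseteq> I"
    and f_deriv: "\<And>x. x \<in> I \<Longrightarrow> (f has_real_derivative f' x) (at x)"
    and f'_deriv: "\<And>x. x \<in> I \<Longrightarrow> (f' has_real_derivative f'' x) (at x)"
    and f''_bounded: "\<exists>B. \<forall>x\<in>I. \<bar>f'' x\<bar> \<le> B"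
    and f_gt: "\<And>x. x \<in> I \<Longrightarrow> f x > 2"
  shows "(\<lambda>n. Determinant.det (tridiag_T f eps n) / (G_f f) ^ n) \<longlonglongrightarrow>
     ((f 0 + sqrt ((f 0)\<^sup>2 - 4)) powr (1 - eps) * (f 1 + sqrt ((f 1)\<^sup>2 - 4)) powr eps)
     / (2 * root 4 (((f 0)\<^sup>2 - 4) * ((f 1)\<^sup>2 - 4)))"
proof -
  have z: "0 \<in> I" and o: "1 \<in> I" using I_cont by auto
  obtain e0 where e0: "e0 > 0" "ball 0 e0 \<subseteq> I" using open_contains_ball_eq[OF I_open] z by blast
  obtain e1 where e1: "e1 > 0" "ball 1 e1 \<subseteq> I" using open_contains_ball_eq[OF I_open] o by blast
  define a :: real where "a = - e0 / 2"
  define b :: real where "b = 1 + e1 / 2"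
  have aI: "a \<in> I" using e0 unfolding a_def by (auto simp: dist_real_def intro!: subsetD[OF e0(2)])
  have bI: "b \<in> I" using e1 unfolding b_def by (auto simp: dist_real_def intro!: subsetD[OF e1(2)])
  have abI: "{a..b} \<subseteq> I" using mem_is_interval_1_I[OF I_interval aI bI] by auto
  obtain B where B: "\<forall>x\<in>I. \<bar>f'' x\<bar> \<le> B" using f''_bounded by blast
  interpret S: setting f f' f'' a b B
  proof
    show "a < 0" using e0 unfolding a_def by simp
    show "1 < b" using e1 unfolding b_def by simp
    show "(f has_real_derivative f' x) (at x within {a..b})" if "x \<in> {a..b}" for x
      using f_deriv abI that by (blast intro: has_field_derivative_at_within)
    show "(f' has_real_derivative f'' x) (at x within {a..b})" if "x \<in> {a..b}" for x
      using f'_deriv abI that by (blast intro: has_field_derivative_at_within)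
    show "\<bar>f'' x\<bar> \<le> B" if "x \<in> {a..b}" for x using B abI that by blast
    show "f x > 2" if "x \<in> {a..b}" for x using f_gt abI that by blast
  qed
  have det_eq: "Determinant.det (tridiag_T f eps n) = Dr (S.dd eps n) n" for n
  proof -
    have "S.dd eps n = (\<lambda>i. f ((real i + eps) / real n))" by (auto simp: S.dd_def S.xx_def)
    thus ?thesis by (simp add: tridiag_T_TM det_TM)
  qed
  have G_eq: "G_f f = exp (integral {0..1} S.g)"
  proof -
    have "(\<lambda>x. ln ((f x + sqrt ((f x)\<^sup>2 - 4)) / 2)) = S.g" by (auto simp: S.g_def S.lam_def S.s_def)
    thus ?thesis unfolding G_f_def by simp
  qed
  show ?thesis unfolding det_eq G_eq S.final_val[symmetric] by (rule S.loc_limit)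
qed

end
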